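(* Let $H$ be a finite-dimensional Hopf algebra over a field $k$, $R\subseteq H$ a Hopf subalgebra, $Q=H/R^+H$, and let $\ell_Q$ be the stage at which the descending chain of annihilator ideals $\mathrm{Ann}\,Q\supseteq\mathrm{Ann}\,Q^{\otimes 2}\supseteq\cdots$ stabilizes. Then $\sigma[Q^{\otimes \ell_Q}]=\sigma[Q^{\otimes(\ell_Q+n)}]$ for all $n\in\mathbb{N}$.
   Context: $R^+=\ker\varepsilon\cap R$ and $Q=H/R^+H$ is a right $H$-module. $Q^{\otimes n}$ denotes the $n$-fold tensor power in mod-$H$ (tensor over $k$ with diagonal action $(m\otimes n)h=mh_{(1)}\otimes nh_{(2)}$). $\mathrm{Ann}\,M=\{h\in H:Mh=0\}$. $\ell_Q$ is the least $n\ge1$ with $\mathrm{Ann}\,Q^{\otimes n}=\mathrm{Ann}\,Q^{\otimes m}$ for all $m\ge n$. For a module $M$ over a finite-dimensional algebra $C$, $\sigma[M]$ is the full subcategory of mod-$C$ whose objects are submodules of quotients of finite direct sums of copies of $M$. *)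

theory Defs
  imports Main
begin

text \<open>A finite-dimensional Hopf algebra H over a field 'k is given by a finite basis
indexed by a finite type 'i; elements of H are coordinate vectors 'i \<Rightarrow> 'k,
and elements of H \<otimes> H are coordinate vectors ('i \<times> 'i) \<Rightarrow> 'k.
The structure maps are given by their structure constants:
  e_a e_b = \<Sum>_c smul a b c e_c,   1 = \<Sum>_a sunit a e_a,
  \<Delta> e_a = \<Sum>_{b,c} scomul a b c e_b \<otimes> e_c,   \<epsilon> e_a = scounit a,
  S e_a = \<Sum>_b santi a b e_b.\<close>

record ('k,'i) hopf_data =
  smul :: "'i \<Rightarrow> 'i \<Rightarrow> 'i \<Rightarrow> 'k"
  sunit :: "'i \<Rightarrow> 'k"
  scomul :: "'i \<Rightarrow> 'i \<Rightarrow> 'i \<Rightarrow> 'k"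
  scounit :: "'i \<Rightarrow> 'k"
  santi :: "'i \<Rightarrow> 'i \<Rightarrow> 'k"

definition basis_vec :: "'i \<Rightarrow> 'i \<Rightarrow> 'k::field" where
  "basis_vec c = (\<lambda>b. if b = c then 1 else 0)"

definition hmult :: "('k::field,'i::finite) hopf_data \<Rightarrow> ('i \<Rightarrow> 'k) \<Rightarrow> ('i \<Rightarrow> 'k) \<Rightarrow> ('i \<Rightarrow> 'k)" where
  "hmult A x y = (\<lambda>c. \<Sum>a\<in>UNIV. \<Sum>b\<in>UNIV. x a * y b * smul A a b c)"

definition hone :: "('k::field,'i::finite) hopf_data \<Rightarrow> ('i \<Rightarrow> 'k)" where
  "hone A = sunit A"

definition hcomul :: "('k::field,'i::finite) hopf_data \<Rightarrow> ('i \<Rightarrow> 'k) \<Rightarrow> ('i \<times> 'i \<Rightarrow> 'k)" where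
  "hcomul A x = (\<lambda>(b,c). \<Sum>a\<in>UNIV. x a * scomul A a b c)"

definition hcounit :: "('k::field,'i::finite) hopf_data \<Rightarrow> ('i \<Rightarrow> 'k) \<Rightarrow> 'k" where
  "hcounit A x = (\<Sum>a\<in>UNIV. x a * scounit A a)"

definition hanti :: "('k::field,'i::finite) hopf_data \<Rightarrow> ('i \<Rightarrow> 'k) \<Rightarrow> ('i \<Rightarrow> 'k)" where
  "hanti A x = (\<lambda>b. \<Sum>a\<in>UNIV. x a * santi A a b)"

definition tens :: "('i \<Rightarrow> 'k::field) \<Rightarrow> ('i \<Rightarrow> 'k) \<Rightarrow> ('i \<times> 'i \<Rightarrow> 'k)" where
  "tens u v = (\<lambda>(a,b). u a * v b)"

definition tmult :: "('k::field,'i::finite) hopf_data \<Rightarrow> ('i \<times> 'i \<Rightarrow> 'k) \<Rightarrow> ('i \<times> 'i \<Rightarrow> 'k) \<Rightarrow> ('i \<times> 'i \<Rightarrow> 'k)" where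
  "tmult A s t = (\<lambda>(x,y). \<Sum>a\<in>UNIV. \<Sum>b\<in>UNIV. \<Sum>c\<in>UNIV. \<Sum>d\<in>UNIV.
       s (a,b) * t (c,d) * smul A a c x * smul A b d y)"

text \<open>(\<Delta> \<otimes> id) and (id \<otimes> \<Delta>) on H \<otimes> H, landing in H \<otimes> H \<otimes> H\<close>
definition comul_left :: "('k::field,'i::finite) hopf_data \<Rightarrow> ('i \<times> 'i \<Rightarrow> 'k) \<Rightarrow> ('i \<times> 'i \<times> 'i \<Rightarrow> 'k)" where
  "comul_left A t = (\<lambda>(p,q,r). \<Sum>b\<in>UNIV. t (b,r) * scomul A b p q)"

definition comul_right :: "('k::field,'i::finite) hopf_data \<Rightarrow> ('i \<times> 'i \<Rightarrow> 'k) \<Rightarrow> ('i \<times> 'i \<times> 'i \<Rightarrow> 'k)" where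
  "comul_right A t = (\<lambda>(p,q,r). \<Sum>c\<in>UNIV. t (p,c) * scomul A c q r)"

definition hopf_algebra :: "('k::field,'i::finite) hopf_data \<Rightarrow> bool" where
  "hopf_algebra A \<longleftrightarrow>
     (\<forall>x y z. hmult A (hmult A x y) z = hmult A x (hmult A y z)) \<and>
     (\<forall>x. hmult A (hone A) x = x \<and> hmult A x (hone A) = x) \<and>
     (\<forall>x. comul_left A (hcomul A x) = comul_right A (hcomul A x)) \<and>
     (\<forall>x. (\<lambda>q. \<Sum>p\<in>UNIV. hcomul A x (p,q) * scounit A p) = x) \<and>
     (\<forall>x. (\<lambda>p. \<Sum>q\<in>UNIV. hcomul A x (p,q) * scounit A q) = x) \<and>
     (\<forall>x y. hcomul A (hmult A x y) = tmult A (hcomul A x) (hcomul A y)) \<and>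
     hcomul A (hone A) = tens (hone A) (hone A) \<and>
     (\<forall>x y. hcounit A (hmult A x y) = hcounit A x * hcounit A y) \<and>
     hcounit A (hone A) = 1 \<and>
     (\<forall>x. (\<lambda>c. \<Sum>p\<in>UNIV. \<Sum>q\<in>UNIV.
            hcomul A x (p,q) * hmult A (hanti A (basis_vec p)) (basis_vec q) c)
          = (\<lambda>c. hcounit A x * hone A c)) \<and>
     (\<forall>x. (\<lambda>c. \<Sum>p\<in>UNIV. \<Sum>q\<in>UNIV.
            hcomul A x (p,q) * hmult A (basis_vec p) (hanti A (basis_vec q)) c)
          = (\<lambda>c. hcounit A x * hone A c))"

text \<open>R \<otimes> R as a subspace of H \<otimes> H: finite sums of simple tensors of elements of R\<close>
definition tspan :: "('i \<Rightarrow> 'k::field) set \<Rightarrow> ('i \<times> 'i \<Rightarrow> 'k) set" where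
  "tspan R = {t. \<exists>(n::nat) f g. (\<forall>j<n. f j \<in> R \<and> g j \<in> R) \<and>
                    t = (\<lambda>p. \<Sum>j<n. tens (f j) (g j) p)}"

definition hopf_subalgebra :: "('k::field,'i::finite) hopf_data \<Rightarrow> ('i \<Rightarrow> 'k) set \<Rightarrow> bool" where
  "hopf_subalgebra A R \<longleftrightarrow>
     (\<lambda>_. 0) \<in> R \<and>
     (\<forall>x\<in>R. \<forall>y\<in>R. (\<lambda>a. x a + y a) \<in> R) \<and>
     (\<forall>c. \<forall>x\<in>R. (\<lambda>a. c * x a) \<in> R) \<and>
     hone A \<in> R \<and>
     (\<forall>x\<in>R. \<forall>y\<in>R. hmult A x y \<in> R) \<and>
     (\<forall>x\<in>R. hcomul A x \<in> tspan R) \<and>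
     (\<forall>x\<in>R. hanti A x \<in> R)"

definition RplusH :: "('k::field,'i::finite) hopf_data \<Rightarrow> ('i \<Rightarrow> 'k) set \<Rightarrow> ('i \<Rightarrow> 'k) set" where
  "RplusH A R = {x. \<exists>(n::nat) f g. (\<forall>j<n. f j \<in> R \<and> hcounit A (f j) = 0) \<and>
                    x = (\<lambda>c. \<Sum>j<n. hmult A (f j) (g j) c)}"

record ('h,'v) rmod =
  mcar :: "'v set"
  madd :: "'v \<Rightarrow> 'v \<Rightarrow> 'v"
  mzero :: 'v
  mact :: "'v \<Rightarrow> 'h \<Rightarrow> 'v"

definition rmodule :: "('k::field,'i::finite) hopf_data \<Rightarrow> ('i \<Rightarrow> 'k, 'v, 'z) rmod_scheme \<Rightarrow> bool" where
  "rmodule A M \<longleftrightarrow>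
     (\<forall>u\<in>mcar M. \<forall>v\<in>mcar M. madd M u v \<in> mcar M) \<and>
     mzero M \<in> mcar M \<and>
     (\<forall>u\<in>mcar M. \<forall>v\<in>mcar M. \<forall>w\<in>mcar M. madd M (madd M u v) w = madd M u (madd M v w)) \<and>
     (\<forall>u\<in>mcar M. \<forall>v\<in>mcar M. madd M u v = madd M v u) \<and>
     (\<forall>u\<in>mcar M. madd M (mzero M) u = u) \<and>
     (\<forall>u\<in>mcar M. \<exists>w\<in>mcar M. madd M u w = mzero M) \<and>
     (\<forall>u\<in>mcar M. \<forall>h. mact M u h \<in> mcar M) \<and>
     (\<forall>u\<in>mcar M. \<forall>v\<in>mcar M. \<forall>h. mact M (madd M u v) h = madd M (mact M u h) (mact M v h)) \<and>
     (\<forall>u\<in>mcar M. \<forall>h h'. mact M u (\<lambda>a. h a + h' a) = madd M (mact M u h) (mact M u h')) \<and>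
     (\<forall>u\<in>mcar M. \<forall>h h'. mact M u (hmult A h h') = mact M (mact M u h) h') \<and>
     (\<forall>u\<in>mcar M. mact M u (hone A) = u)"

definition submod :: "'v set \<Rightarrow> ('h, 'v, 'z) rmod_scheme \<Rightarrow> bool" where
  "submod N M \<longleftrightarrow> N \<subseteq> mcar M \<and> mzero M \<in> N \<and>
     (\<forall>u\<in>N. \<forall>v\<in>N. madd M u v \<in> N) \<and>
     (\<forall>u\<in>N. \<exists>w\<in>N. madd M u w = mzero M) \<and>
     (\<forall>u\<in>N. \<forall>h. mact M u h \<in> N)"

definition dsum :: "nat \<Rightarrow> ('h, 'v) rmod \<Rightarrow> ('h, nat \<Rightarrow> 'v) rmod" where
  "dsum m M = \<lparr> mcar = {f. (\<forall>j<m. f j \<in> mcar M) \<and> (\<forall>j\<ge>m. f j = mzero M)},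
                madd = (\<lambda>f g j. madd M (f j) (g j)),
                mzero = (\<lambda>j. mzero M),
                mact = (\<lambda>f h j. mact M (f j) h) \<rparr>"

definition mcoset :: "('h, 'v) rmod \<Rightarrow> 'v set \<Rightarrow> 'v \<Rightarrow> 'v set" where
  "mcoset M W v = {madd M v w | w. w \<in> W}"

definition quot :: "('h, 'v) rmod \<Rightarrow> 'v set \<Rightarrow> ('h, 'v set) rmod" where
  "quot M W = \<lparr> mcar = mcoset M W ` mcar M,
                madd = (\<lambda>C D. {madd M c d | c d. c \<in> C \<and> d \<in> D}),
                mzero = W,
                mact = (\<lambda>C h. {madd M (mact M c h) w | c w. c \<in> C \<and> w \<in> W}) \<rparr>"

definition rhom :: "('h, 'v, 'y) rmod_scheme \<Rightarrow> ('h, 'w, 'z) rmod_scheme \<Rightarrow> ('v \<Rightarrow> 'w) \<Rightarrow> bool" where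
  "rhom M N f \<longleftrightarrow> (\<forall>u\<in>mcar M. f u \<in> mcar N) \<and>
     (\<forall>u\<in>mcar M. \<forall>v\<in>mcar M. f (madd M u v) = madd N (f u) (f v)) \<and>
     (\<forall>u\<in>mcar M. \<forall>h. f (mact M u h) = mact N (f u) h)"

definition riso :: "('h, 'v, 'y) rmod_scheme \<Rightarrow> ('h, 'w, 'z) rmod_scheme \<Rightarrow> bool" where
  "riso M N \<longleftrightarrow> (\<exists>f. rhom M N f \<and> bij_betw f (mcar M) (mcar N))"

text \<open>X \<in> \<sigma>[M]: X is isomorphic to a submodule S of a quotient (M^m)/W\<close>
definition in_sigma :: "('h, 'v) rmod \<Rightarrow> ('h, 'x) rmod \<Rightarrow> bool" where
  "in_sigma M X \<longleftrightarrow> (\<exists>m W S. submod W (dsum m M) \<and>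
       submod S (quot (dsum m M) W) \<and>
       riso X ((quot (dsum m M) W)\<lparr>mcar := S\<rparr>))"

definition annih :: "('i \<Rightarrow> 'k) set \<Rightarrow> ('i \<Rightarrow> 'k, 'v) rmod \<Rightarrow> ('i \<Rightarrow> 'k) set" where
  "annih H M = {h \<in> H. \<forall>u\<in>mcar M. mact M u h = mzero M}"

text \<open>H^{\<otimes>n} in coordinates: functions on lists of basis indices, supported on length n\<close>

fun itcomul :: "('k::field,'i::finite) hopf_data \<Rightarrow> nat \<Rightarrow> ('i \<Rightarrow> 'k) \<Rightarrow> ('i list \<Rightarrow> 'k)" where
  "itcomul A 0 h = (\<lambda>xs. if xs = [] then hcounit A h else 0)"
| "itcomul A (Suc n) h = (\<lambda>xs. case xs of [] \<Rightarrow> 0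
       | x # ys \<Rightarrow> (\<Sum>c\<in>UNIV. hcomul A h (x,c) * itcomul A n (basis_vec c) ys))"

text \<open>diagonal right action: (x_1 \<otimes> ... \<otimes> x_n) h = x_1 h_(1) \<otimes> ... \<otimes> x_n h_(n)\<close>
definition tact :: "('k::field,'i::finite) hopf_data \<Rightarrow> nat \<Rightarrow> ('i list \<Rightarrow> 'k) \<Rightarrow> ('i \<Rightarrow> 'k) \<Rightarrow> ('i list \<Rightarrow> 'k)" where
  "tact A n t h = (\<lambda>ys. if length ys = n then
      (\<Sum>xs\<in>{xs. length xs = n}. \<Sum>zs\<in>{zs. length zs = n}.
          t xs * itcomul A n h zs * (\<Prod>j<n. smul A (xs ! j) (zs ! j) (ys ! j)))
      else 0)"

definition Htens :: "('k::field,'i::finite) hopf_data \<Rightarrow> nat \<Rightarrow> ('i \<Rightarrow> 'k, 'i list \<Rightarrow> 'k) rmod" where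
  "Htens A n = \<lparr> mcar = {t. \<forall>xs. length xs \<noteq> n \<longrightarrow> t xs = 0},
                 madd = (\<lambda>s t xs. s xs + t xs),
                 mzero = (\<lambda>xs. 0),
                 mact = tact A n \<rparr>"

definition ptens :: "('i \<Rightarrow> 'k::field) list \<Rightarrow> ('i list \<Rightarrow> 'k)" where
  "ptens vs = (\<lambda>xs. if length xs = length vs then (\<Prod>j<length vs. (vs ! j) (xs ! j)) else 0)"

text \<open>kernel of H^{\<otimes>n} \<rightarrow> Q^{\<otimes>n}: \<Sum>_i H \<otimes> ... \<otimes> R^+H \<otimes> ... \<otimes> H\<close>
definition Kn :: "('k::field,'i::finite) hopf_data \<Rightarrow> ('i \<Rightarrow> 'k) set \<Rightarrow> nat \<Rightarrow> ('i list \<Rightarrow> 'k) set" where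
  "Kn A R n = {t. \<exists>(m::nat) F. (\<forall>j<m. length (F j) = n \<and> (\<exists>i<n. F j ! i \<in> RplusH A R)) \<and>
                   t = (\<lambda>xs. \<Sum>j<m. ptens (F j) xs)}"

definition Qtens :: "('k::field,'i::finite) hopf_data \<Rightarrow> ('i \<Rightarrow> 'k) set \<Rightarrow> nat \<Rightarrow> ('i \<Rightarrow> 'k, ('i list \<Rightarrow> 'k) set) rmod" where
  "Qtens A R n = quot (Htens A n) (Kn A R n)"

definition ellQ :: "('k::field,'i::finite) hopf_data \<Rightarrow> ('i \<Rightarrow> 'k) set \<Rightarrow> nat" where
  "ellQ A R = (LEAST n. 1 \<le> n \<and> (\<forall>m\<ge>n. annih UNIV (Qtens A R n) = annih UNIV (Qtens A R m)))"

end

theory Submission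
  imports Defs "HOL-Library.Function_Algebras" "HOL.Vector_Spaces"
begin

lemma sum_if_outer: "(\<Sum>x\<in>S. if P then f x else 0) = (if P then (\<Sum>x\<in>S. f x) else (0::'a::comm_monoid_add))" by simp
lemmas bsimps = basis_vec_def if_distrib[of "\<lambda>x. x * _"] if_distrib[of "\<lambda>x. _ * x"] sum_if_outer

lemma sum_basis_right [simp]: "(\<Sum>b\<in>(UNIV::'i::finite set). f b * basis_vec c b) = (f c :: 'k::field)"
  by (simp add: bsimps cong: if_cong)

lemma sum_basis_left [simp]: "(\<Sum>b\<in>(UNIV::'i::finite set). basis_vec c b * f b) = (f c :: 'k::field)"
  by (simp add: bsimps cong: if_cong)

lemma hmult_basis: "hmult A (basis_vec a) (basis_vec b) = (\<lambda>c. smul A a b c)"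
  unfolding hmult_def by (simp add: bsimps cong: if_cong)

lemma hcomul_basis: "hcomul A (basis_vec a) (p,q) = scomul A a p q"
  unfolding hcomul_def by (simp add: bsimps cong: if_cong)

lemma hcounit_basis: "hcounit A (basis_vec a) = scounit A a"
  unfolding hcounit_def by (simp add: bsimps cong: if_cong)

context
  fixes A :: "('k::field, 'i::finite) hopf_data"
  assumes H: "hopf_algebra A"
begin

lemmas HP = H[unfolded hopf_algebra_def]
lemmas H1 = HP[THEN conjunct1]
lemmas H2 = HP[THEN conjunct2, THEN conjunct1]
lemmas H4 = HP[THEN conjunct2, THEN conjunct2, THEN conjunct2, THEN conjunct1]
lemmas H5 = HP[THEN conjunct2, THEN conjunct2, THEN conjunct2, THEN conjunct2, THEN conjunct1]
lemmas H6 = HP[THEN conjunct2, THEN conjunct2, THEN conjunct2, THEN conjunct2, THEN conjunct2, THEN conjunct1]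
lemmas H7 = HP[THEN conjunct2, THEN conjunct2, THEN conjunct2, THEN conjunct2, THEN conjunct2, THEN conjunct2, THEN conjunct1]
lemmas H8 = HP[THEN conjunct2, THEN conjunct2, THEN conjunct2, THEN conjunct2, THEN conjunct2, THEN conjunct2, THEN conjunct2, THEN conjunct1]
lemmas H9 = HP[THEN conjunct2, THEN conjunct2, THEN conjunct2, THEN conjunct2, THEN conjunct2, THEN conjunct2, THEN conjunct2, THEN conjunct2, THEN conjunct1]

lemma F_assoc: "(\<Sum>w\<in>UNIV. smul A a b w * smul A w c y) = (\<Sum>z\<in>UNIV. smul A b c z * smul A a z y)"
proof -
  have "hmult A (hmult A (basis_vec a) (basis_vec b)) (basis_vec c) y =
        hmult A (basis_vec a) (hmult A (basis_vec b) (basis_vec c)) y"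
    using H1 by simp
  thus ?thesis unfolding hmult_basis unfolding hmult_def
    by (simp add: bsimps cong: if_cong)
qed

lemma F_unit_left: "(\<Sum>z\<in>UNIV. sunit A z * smul A z a y) = (if a = y then 1 else 0)"
proof -
  have "hmult A (hone A) (basis_vec a) y = basis_vec a y"
    using H2 by simp
  thus ?thesis unfolding hmult_def hone_def by (simp add: bsimps cong: if_cong)
qed

lemma F_unit_right: "(\<Sum>z\<in>UNIV. sunit A z * smul A a z y) = (if a = y then 1 else 0)"
proof -
  have "hmult A (basis_vec a) (hone A) y = basis_vec a y"
    using H2 by simp
  thus ?thesis unfolding hmult_def hone_def by (simp add: bsimps mult.commute cong: if_cong)
qed

lemma F_counit_left: "(\<Sum>p\<in>UNIV. scomul A a p q * scounit A p) = (if a = q then 1 else 0)"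
proof -
  have "(\<lambda>q. \<Sum>p\<in>UNIV. hcomul A (basis_vec a) (p,q) * scounit A p) q = basis_vec a q"
    using fun_cong[OF spec[OF H4, of "basis_vec a"], of q] by simp
  thus ?thesis unfolding hcomul_basis by (simp add: bsimps cong: if_cong)
qed

lemma F_counit_right: "(\<Sum>q\<in>UNIV. scomul A a p q * scounit A q) = (if a = p then 1 else 0)"
proof -
  have "(\<lambda>p. \<Sum>q\<in>UNIV. hcomul A (basis_vec a) (p,q) * scounit A q) p = basis_vec a p"
    using fun_cong[OF spec[OF H5, of "basis_vec a"], of p] by simp
  thus ?thesis unfolding hcomul_basis by (simp add: bsimps cong: if_cong)
qed

lemma F_eps_mult: "(\<Sum>c\<in>UNIV. smul A a b c * scounit A c) = scounit A a * scounit A b"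
proof -
  have "hcounit A (hmult A (basis_vec a) (basis_vec b)) = hcounit A (basis_vec a) * hcounit A (basis_vec b)"
    using H8 by simp
  thus ?thesis unfolding hmult_basis hcounit_basis by (simp add: hcounit_def)
qed

lemma F_eps_one: "(\<Sum>a\<in>UNIV. sunit A a * scounit A a) = 1"
  using H9 unfolding hcounit_def hone_def by simp

lemma F_Delta_one: "(\<Sum>a\<in>UNIV. sunit A a * scomul A a b c) = sunit A b * sunit A c"
proof -
  have "hcomul A (hone A) (b,c) = tens (hone A) (hone A) (b,c)"
    using H7 by simp
  thus ?thesis unfolding hcomul_def hone_def tens_def by simp
qed

lemma F_Delta_mult: "(\<Sum>z\<in>UNIV. smul A a b z * scomul A z p q) =
   (\<Sum>a1\<in>UNIV. \<Sum>a2\<in>UNIV. \<Sum>b1\<in>UNIV. \<Sum>b2\<in>UNIV.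
      scomul A a a1 a2 * scomul A b b1 b2 * smul A a1 b1 p * smul A a2 b2 q)"
proof -
  have "hcomul A (hmult A (basis_vec a) (basis_vec b)) (p,q) =
        tmult A (hcomul A (basis_vec a)) (hcomul A (basis_vec b)) (p,q)"
    using H6 by simp
  thus ?thesis unfolding hmult_basis tmult_def by (simp add: hcomul_basis hcomul_def)
qed

lemma F_hmult_assoc: "hmult A (hmult A x y) z = hmult A x (hmult A y z)"
  using H1 by simp
lemma F_hmult_one_left: "hmult A (hone A) x = x"
  using H2 by simp
lemma F_hmult_one_right: "hmult A x (hone A) = x"
  using H2 by simp

end

section \<open>Lists of fixed length\<close>

lemma L_Suc_eq: "{xs::'a list. length xs = Suc n} = (\<lambda>(x,xs). x#xs) ` (UNIV \<times> {xs. length xs = n})"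
proof (rule set_eqI, rule iffI)
  fix xs :: "'a list" assume "xs \<in> {xs. length xs = Suc n}"
  then obtain y ys where "xs = y # ys" "length ys = n" by (auto simp: length_Suc_conv)
  thus "xs \<in> (\<lambda>(x,xs). x#xs) ` (UNIV \<times> {xs. length xs = n})" by force
qed auto

lemma finite_L [simp]: "finite {xs::'a::finite list. length xs = n}"
  by (induction n) (auto simp: L_Suc_eq)

lemma sum_L_0 [simp]: "(\<Sum>xs\<in>{xs::'a list. length xs = 0}. f xs) = f []"
  by simp

lemma sum_L_Suc: "(\<Sum>xs\<in>{xs::'a list. length xs = Suc n}. f xs) = (\<Sum>x\<in>UNIV. \<Sum>xs\<in>{xs. length xs = n}. f (x#xs))"
proof -
  have inj: "inj_on (\<lambda>(x,xs). x#xs) (UNIV \<times> {xs::'a list. length xs = n})"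
    by (auto simp: inj_on_def)
  show ?thesis
    unfolding L_Suc_eq sum.reindex[OF inj] sum.cartesian_product by (simp add: case_prod_beta')
qed

lemma prod_sum_L: "(\<Sum>zs\<in>{zs::'a::finite list. length zs = n}. \<Prod>j<n. g j (zs!j)) = (\<Prod>j<n. \<Sum>z\<in>UNIV. (g j z :: 'k::comm_semiring_1))"
proof (induction n arbitrary: g)
  case 0 thus ?case by simp
next
  case (Suc n)
  have "(\<Sum>zs\<in>{zs::'a list. length zs = Suc n}. \<Prod>j<Suc n. g j (zs!j))
      = (\<Sum>z\<in>UNIV. \<Sum>zs\<in>{zs::'a list. length zs = n}. g 0 z * (\<Prod>j<n. g (Suc j) (zs!j)))"
    unfolding sum_L_Suc prod.lessThan_Suc_shift by simp
  also have "\<dots> = (\<Sum>z\<in>UNIV. g 0 z * (\<Sum>zs\<in>{zs::'a list. length zs = n}. (\<Prod>j<n. g (Suc j) (zs!j))))"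
    by (simp add: sum_distrib_left)
  also have "\<dots> = (\<Sum>z\<in>UNIV. g 0 z) * (\<Prod>j<n. \<Sum>z\<in>UNIV. g (Suc j) z)"
    using Suc[of "\<lambda>j. g (Suc j)"] by (simp add: sum_distrib_right)
  also have "\<dots> = (\<Prod>j<Suc n. \<Sum>z\<in>UNIV. g j z)"
    unfolding prod.lessThan_Suc_shift by simp
  finally show ?case .
qed

lemma prod_delta_L:
  assumes "length xs = n" "length ys = n"
  shows "(\<Prod>j<n. (if xs!j = ys!j then 1 else (0::'k::comm_semiring_1))) = (if xs = ys then 1 else 0)"
proof (cases "xs = ys")
  case True thus ?thesis by simp
next
  case False
  then obtain j where "j < n" "xs!j \<noteq> ys!j" using assms nth_equalityI by metis
  hence "(\<Prod>j<n. (if xs!j = ys!j then 1 else (0::'k))) = 0" by (intro prod_zero) auto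
  thus ?thesis using False by simp
qed

lemma sum_delta_L:
  assumes "length ys = n"
  shows "(\<Sum>xs\<in>{xs::'a::finite list. length xs = n}. f xs * (\<Prod>j<n. (if xs!j = ys!j then 1 else (0::'k::comm_semiring_1)))) = f ys"
proof -
  have "(\<Sum>xs\<in>{xs::'a list. length xs = n}. f xs * (\<Prod>j<n. (if xs!j = ys!j then 1 else (0::'k))))
      = (\<Sum>xs\<in>{xs::'a list. length xs = n}. if xs = ys then f xs else 0)"
    using assms by (intro sum.cong) (auto simp: prod_delta_L)
  thus ?thesis using assms by simp
qed

definition tprod :: "('k::field,'i::finite) hopf_data \<Rightarrow> nat \<Rightarrow> ('i list \<Rightarrow> 'k) \<Rightarrow> ('i list \<Rightarrow> 'k) \<Rightarrow> ('i list \<Rightarrow> 'k)" where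
 "tprod A n t s = (\<lambda>ys. \<Sum>xs\<in>{xs. length xs = n}. \<Sum>zs\<in>{zs. length zs = n}. t xs * s zs * (\<Prod>j<n. smul A (xs!j) (zs!j) (ys!j)))"

lemma sum_swap3: "(\<Sum>x\<in>X. \<Sum>z\<in>Z. \<Sum>a\<in>C. F x z a) = (\<Sum>a\<in>C. \<Sum>x\<in>X. \<Sum>z\<in>Z. (F x z a :: 'a::comm_monoid_add))"
proof -
  have "(\<Sum>x\<in>X. \<Sum>z\<in>Z. \<Sum>a\<in>C. F x z a) = (\<Sum>x\<in>X. \<Sum>a\<in>C. \<Sum>z\<in>Z. F x z a)"
    by (rule sum.cong[OF refl], rule sum.swap)
  also have "\<dots> = (\<Sum>a\<in>C. \<Sum>x\<in>X. \<Sum>z\<in>Z. F x z a)" by (rule sum.swap)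
  finally show ?thesis .
qed

lemma sum_swap_in: "(\<Sum>c\<in>C. \<Sum>a1\<in>A1. \<Sum>a2\<in>A2. \<Sum>b1\<in>B1. \<Sum>b2\<in>B2. F c a1 a2 b1 b2) = (\<Sum>a1\<in>A1. \<Sum>a2\<in>A2. \<Sum>b1\<in>B1. \<Sum>b2\<in>B2. \<Sum>c\<in>C. (F c a1 a2 b1 b2::'a::comm_monoid_add))"
  by (simp only: sum.swap[of _ C])

lemma tprod_0 [simp]: "tprod A 0 t s [] = t [] * s []"
  by (simp add: tprod_def)

lemma tprod_Suc: "tprod A (Suc n) t s (y#ys) = (\<Sum>a\<in>UNIV. \<Sum>b\<in>UNIV. smul A a b y * tprod A n (\<lambda>xs. t (a#xs)) (\<lambda>zs. s (b#zs)) ys)"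
proof -
  have "tprod A (Suc n) t s (y#ys) = (\<Sum>a\<in>UNIV. \<Sum>xs\<in>{xs. length xs = n}. \<Sum>b\<in>UNIV. \<Sum>zs\<in>{zs. length zs = n}.
     smul A a b y * (t (a#xs) * s (b#zs) * (\<Prod>j<n. smul A (xs!j) (zs!j) (ys!j))))"
    unfolding tprod_def sum_L_Suc prod.lessThan_Suc_shift by (simp add: mult_ac)
  also have "\<dots> = (\<Sum>a\<in>UNIV. \<Sum>b\<in>UNIV. \<Sum>xs\<in>{xs. length xs = n}. \<Sum>zs\<in>{zs. length zs = n}.
     smul A a b y * (t (a#xs) * s (b#zs) * (\<Prod>j<n. smul A (xs!j) (zs!j) (ys!j))))"
    by (rule sum.cong[OF refl], rule sum.swap)
  also have "\<dots> = (\<Sum>a\<in>UNIV. \<Sum>b\<in>UNIV. smul A a b y * tprod A n (\<lambda>xs. t (a#xs)) (\<lambda>zs. s (b#zs)) ys)"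
    unfolding tprod_def by (simp add: sum_distrib_left)
  finally show ?thesis .
qed

lemma tprod_lin_left: "tprod A n (\<lambda>xs. \<Sum>a\<in>UNIV. c a * t a xs) s ys = (\<Sum>a\<in>UNIV. c a * tprod A n (t a) s ys)"
proof -
  have "tprod A n (\<lambda>xs. \<Sum>a\<in>UNIV. c a * t a xs) s ys =
     (\<Sum>xs\<in>{xs. length xs = n}. \<Sum>zs\<in>{zs. length zs = n}. \<Sum>a\<in>UNIV. c a * (t a xs * s zs * (\<Prod>j<n. smul A (xs!j) (zs!j) (ys!j))))"
    unfolding tprod_def by (simp add: sum_distrib_left sum_distrib_right mult_ac)
  also have "\<dots> = (\<Sum>a\<in>UNIV. \<Sum>xs\<in>{xs. length xs = n}. \<Sum>zs\<in>{zs. length zs = n}. c a * (t a xs * s zs * (\<Prod>j<n. smul A (xs!j) (zs!j) (ys!j))))"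
    by (rule sum_swap3)
  also have "\<dots> = (\<Sum>a\<in>UNIV. c a * tprod A n (t a) s ys)"
    unfolding tprod_def by (simp add: sum_distrib_left)
  finally show ?thesis .
qed

lemma tprod_lin_right: "tprod A n t (\<lambda>zs. \<Sum>a\<in>UNIV. c a * s a zs) ys = (\<Sum>a\<in>UNIV. c a * tprod A n t (s a) ys)"
proof -
  have "tprod A n t (\<lambda>zs. \<Sum>a\<in>UNIV. c a * s a zs) ys =
     (\<Sum>xs\<in>{xs. length xs = n}. \<Sum>zs\<in>{zs. length zs = n}. \<Sum>a\<in>UNIV. c a * (t xs * s a zs * (\<Prod>j<n. smul A (xs!j) (zs!j) (ys!j))))"
    unfolding tprod_def by (simp add: sum_distrib_left sum_distrib_right mult_ac)
  also have "\<dots> = (\<Sum>a\<in>UNIV. \<Sum>xs\<in>{xs. length xs = n}. \<Sum>zs\<in>{zs. length zs = n}. c a * (t xs * s a zs * (\<Prod>j<n. smul A (xs!j) (zs!j) (ys!j))))"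
    by (rule sum_swap3)
  also have "\<dots> = (\<Sum>a\<in>UNIV. c a * tprod A n t (s a) ys)"
    unfolding tprod_def by (simp add: sum_distrib_left)
  finally show ?thesis .
qed

lemma itc_len: "length zs \<noteq> n \<Longrightarrow> itcomul A n h zs = 0"
proof (induction n arbitrary: h zs)
  case 0 thus ?case by simp
next
  case (Suc n) thus ?case by (cases zs) auto
qed

lemma itc_lin: "itcomul A n h zs = (\<Sum>a\<in>UNIV. h a * itcomul A n (basis_vec a) zs)"
proof (cases n)
  case 0 thus ?thesis by (simp add: hcounit_basis hcounit_def sum_distrib_right)
next
  case (Suc m)
  show ?thesis
  proof (cases zs)
    case Nil thus ?thesis using Suc by simp
  next
    case (Cons x ys)
    have "itcomul A n h zs = (\<Sum>c\<in>UNIV. \<Sum>a\<in>UNIV. h a * (scomul A a x c * itcomul A m (basis_vec c) ys))"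
      using Suc Cons by (simp add: hcomul_def sum_distrib_left sum_distrib_right mult_ac)
    also have "\<dots> = (\<Sum>a\<in>UNIV. \<Sum>c\<in>UNIV. h a * (scomul A a x c * itcomul A m (basis_vec c) ys))"
      by (rule sum.swap)
    also have "\<dots> = (\<Sum>a\<in>UNIV. h a * itcomul A n (basis_vec a) zs)"
      using Suc Cons by (simp add: hcomul_basis sum_distrib_left)
    finally show ?thesis .
  qed
qed

lemma itc_Suc_basis: "itcomul A (Suc n) (basis_vec a) (x#ys) = (\<Sum>c\<in>UNIV. scomul A a x c * itcomul A n (basis_vec c) ys)"
  by (simp add: hcomul_basis)

lemma itc_add: "itcomul A n (\<lambda>a. h a + h' a) zs = itcomul A n h zs + itcomul A n h' zs"
  by (subst (1 2 3) itc_lin) (simp add: distrib_right sum.distrib)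

lemma itc_smult: "itcomul A n (\<lambda>a. c * h a) zs = c * itcomul A n h zs"
  by (subst (1 2) itc_lin) (simp add: sum_distrib_left mult_ac)

lemma itc_zero: "itcomul A n (\<lambda>a. 0) zs = 0"
  by (subst itc_lin) simp

context
  fixes A :: "('k::field, 'i::finite) hopf_data"
  assumes H: "hopf_algebra A"
begin

lemma itc_one: "itcomul A n (hone A) zs = (if length zs = n then \<Prod>j<n. sunit A (zs!j) else 0)"
proof (induction n arbitrary: zs)
  case 0 thus ?case using F_eps_one[OF H] by (simp add: hcounit_def hone_def mult.commute)
next
  case (Suc n)
  show ?case
  proof (cases zs)
    case Nil thus ?thesis by simp
  next
    case (Cons x ys)
    have "itcomul A (Suc n) (hone A) zs = (\<Sum>c\<in>UNIV. sunit A x * (sunit A c * itcomul A n (basis_vec c) ys))"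
      using Cons F_Delta_one[OF H] by (simp add: hcomul_def hone_def mult.commute mult.left_commute)
    also have "\<dots> = sunit A x * itcomul A n (hone A) ys"
      by (simp add: hone_def sum_distrib_left[symmetric] itc_lin[of A n "sunit A" ys, symmetric])
    finally show ?thesis using Cons Suc by (simp add: prod.lessThan_Suc_shift del: prod.lessThan_Suc)
  qed
qed

lemma itc_mult: "length zs = n \<Longrightarrow> itcomul A n (hmult A h h') zs = tprod A n (itcomul A n h) (itcomul A n h') zs"
proof (induction n arbitrary: h h' zs)
  case 0 thus ?case using H8[OF H] by simp
next
  case (Suc n)
  then obtain z ys where zs: "zs = z # ys" and len: "length ys = n" by (auto simp: length_Suc_conv)
  let ?D = "hcomul A h" and ?D' = "hcomul A h'"
  have "itcomul A (Suc n) (hmult A h h') zs = (\<Sum>c\<in>UNIV. tmult A ?D ?D' (z,c) * itcomul A n (basis_vec c) ys)"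
    using zs H6[OF H] by simp
  also have "\<dots> = (\<Sum>c\<in>UNIV. \<Sum>a1\<in>UNIV. \<Sum>a2\<in>UNIV. \<Sum>b1\<in>UNIV. \<Sum>b2\<in>UNIV.
        (?D (a1,a2) * ?D' (b1,b2) * smul A a1 b1 z) * (smul A a2 b2 c * itcomul A n (basis_vec c) ys))"
    unfolding tmult_def by (simp only: sum_distrib_right case_prod_conv) (simp only: mult.assoc)
  also have "\<dots> = (\<Sum>a1\<in>UNIV. \<Sum>a2\<in>UNIV. \<Sum>b1\<in>UNIV. \<Sum>b2\<in>UNIV.
        (?D (a1,a2) * ?D' (b1,b2) * smul A a1 b1 z) * (\<Sum>c\<in>UNIV. smul A a2 b2 c * itcomul A n (basis_vec c) ys))"
    by (subst sum_swap_in) (simp add: sum_distrib_left)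
  also have "\<dots> = (\<Sum>a1\<in>UNIV. \<Sum>a2\<in>UNIV. \<Sum>b1\<in>UNIV. \<Sum>b2\<in>UNIV.
        (?D (a1,a2) * ?D' (b1,b2) * smul A a1 b1 z) * tprod A n (itcomul A n (basis_vec a2)) (itcomul A n (basis_vec b2)) ys)"
  proof -
    have "(\<Sum>c\<in>UNIV. smul A a2 b2 c * itcomul A n (basis_vec c) ys) = tprod A n (itcomul A n (basis_vec a2)) (itcomul A n (basis_vec b2)) ys" for a2 b2
      using itc_lin[of A n "hmult A (basis_vec a2) (basis_vec b2)" ys] Suc.IH[OF len, of "basis_vec a2" "basis_vec b2"]
      by (simp add: hmult_basis)
    thus ?thesis by simp
  qed
  also have "\<dots> = (\<Sum>a1\<in>UNIV. \<Sum>b1\<in>UNIV. \<Sum>a2\<in>UNIV. \<Sum>b2\<in>UNIV.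
        smul A a1 b1 z * (?D (a1,a2) * (?D' (b1,b2) * tprod A n (itcomul A n (basis_vec a2)) (itcomul A n (basis_vec b2)) ys)))"
    by (rule sum.cong[OF refl], subst sum.swap, simp add: mult_ac)
  also have "\<dots> = (\<Sum>a1\<in>UNIV. \<Sum>b1\<in>UNIV. smul A a1 b1 z *
        tprod A n (\<lambda>as. itcomul A (Suc n) h (a1#as)) (\<lambda>bs. itcomul A (Suc n) h' (b1#bs)) ys)"
    by (simp add: tprod_lin_left tprod_lin_right sum_distrib_left)
  also have "\<dots> = tprod A (Suc n) (itcomul A (Suc n) h) (itcomul A (Suc n) h') zs"
    unfolding zs tprod_Suc ..
  finally show ?case .
qed

end

lemma tprod_cong: "(\<And>xs. length xs = n \<Longrightarrow> t xs = t' xs) \<Longrightarrow> (\<And>xs. length xs = n \<Longrightarrow> s xs = s' xs) \<Longrightarrow> tprod A n t s ys = tprod A n t' s' ys"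
  unfolding tprod_def by (intro sum.cong) auto

lemma tprod_add_left: "tprod A n (\<lambda>xs. t xs + t' xs) s ys = tprod A n t s ys + tprod A n t' s ys"
  unfolding tprod_def by (simp add: distrib_right sum.distrib)

lemma tprod_add_right: "tprod A n t (\<lambda>xs. s xs + s' xs) ys = tprod A n t s ys + tprod A n t s' ys"
  unfolding tprod_def by (simp add: distrib_right distrib_left sum.distrib)

lemma tprod_smult_left: "tprod A n (\<lambda>xs. c * t xs) s ys = c * tprod A n t s ys"
  unfolding tprod_def by (simp add: sum_distrib_left mult_ac)

lemma tprod_smult_right: "tprod A n t (\<lambda>xs. c * s xs) ys = c * tprod A n t s ys"
  unfolding tprod_def by (simp add: sum_distrib_left mult_ac)

lemma tact_tprod: "tact A n t h = (\<lambda>ys. if length ys = n then tprod A n t (itcomul A n h) ys else 0)"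
  by (simp add: tact_def tprod_def fun_eq_iff)

context
  fixes A :: "('k::field, 'i::finite) hopf_data"
  assumes H: "hopf_algebra A"
begin

lemma tprod_assoc:
  assumes "length ys = n"
  shows "tprod A n (tprod A n t u) v ys = tprod A n t (tprod A n u v) ys"
proof -
  let ?L = "{xs::'i list. length xs = n}"
  have "tprod A n (tprod A n t u) v ys =
     (\<Sum>ws\<in>?L. \<Sum>bs\<in>?L. \<Sum>xs\<in>?L. \<Sum>as\<in>?L. (t xs * u as * v bs) *
        ((\<Prod>j<n. smul A (xs!j) (as!j) (ws!j)) * (\<Prod>j<n. smul A (ws!j) (bs!j) (ys!j))))"
    unfolding tprod_def by (simp add: sum_distrib_left sum_distrib_right mult_ac)
  also have "\<dots> = (\<Sum>xs\<in>?L. \<Sum>as\<in>?L. \<Sum>bs\<in>?L. \<Sum>ws\<in>?L. (t xs * u as * v bs) *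
        ((\<Prod>j<n. smul A (xs!j) (as!j) (ws!j)) * (\<Prod>j<n. smul A (ws!j) (bs!j) (ys!j))))"
  proof -
    have s1: "(\<Sum>ws\<in>W. \<Sum>bs\<in>B. \<Sum>xs\<in>X. \<Sum>as\<in>Al. F ws bs xs as) = (\<Sum>xs\<in>X. \<Sum>as\<in>Al. \<Sum>bs\<in>B. \<Sum>ws\<in>W. (F ws bs xs as :: 'k))"
      for W B X Al F
    proof -
      have "(\<Sum>ws\<in>W. \<Sum>bs\<in>B. \<Sum>xs\<in>X. \<Sum>as\<in>Al. F ws bs xs as) = (\<Sum>bs\<in>B. \<Sum>xs\<in>X. \<Sum>as\<in>Al. \<Sum>ws\<in>W. F ws bs xs as)"
        by (simp only: sum.swap[of _ W])
      also have "\<dots> = (\<Sum>xs\<in>X. \<Sum>as\<in>Al. \<Sum>bs\<in>B. \<Sum>ws\<in>W. F ws bs xs as)"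
        by (simp only: sum.swap[of _ B])
      finally show ?thesis .
    qed
    show ?thesis by (rule s1)
  qed
  also have "\<dots> = (\<Sum>xs\<in>?L. \<Sum>as\<in>?L. \<Sum>bs\<in>?L. (t xs * u as * v bs) *
        (\<Prod>j<n. \<Sum>w\<in>UNIV. smul A (xs!j) (as!j) w * smul A w (bs!j) (ys!j)))"
    by (simp add: sum_distrib_left[symmetric] prod.distrib[symmetric] prod_sum_L[where g = "\<lambda>j w. smul A (xs!j) (as!j) w * smul A w (bs!j) (ys!j)" for xs as bs])
  also have "\<dots> = (\<Sum>xs\<in>?L. \<Sum>as\<in>?L. \<Sum>bs\<in>?L. (t xs * u as * v bs) *
        (\<Prod>j<n. \<Sum>z\<in>UNIV. smul A (as!j) (bs!j) z * smul A (xs!j) z (ys!j)))"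
    by (simp add: F_assoc[OF H])
  also have "\<dots> = (\<Sum>xs\<in>?L. \<Sum>as\<in>?L. \<Sum>bs\<in>?L. \<Sum>zs\<in>?L. (t xs * u as * v bs) *
        ((\<Prod>j<n. smul A (as!j) (bs!j) (zs!j)) * (\<Prod>j<n. smul A (xs!j) (zs!j) (ys!j))))"
    by (simp add: sum_distrib_left[symmetric] prod.distrib[symmetric] prod_sum_L[where g = "\<lambda>j z. smul A (as!j) (bs!j) z * smul A (xs!j) z (ys!j)" for xs as bs])
  also have "\<dots> = (\<Sum>xs\<in>?L. \<Sum>zs\<in>?L. \<Sum>as\<in>?L. \<Sum>bs\<in>?L. (t xs * u as * v bs) *
        ((\<Prod>j<n. smul A (as!j) (bs!j) (zs!j)) * (\<Prod>j<n. smul A (xs!j) (zs!j) (ys!j))))"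
  proof -
    have s2: "(\<Sum>as\<in>Al. \<Sum>bs\<in>B. \<Sum>zs\<in>Z. F as bs zs) = (\<Sum>zs\<in>Z. \<Sum>as\<in>Al. \<Sum>bs\<in>B. (F as bs zs :: 'k))"
      for Al B Z F
    proof -
      have "(\<Sum>as\<in>Al. \<Sum>bs\<in>B. \<Sum>zs\<in>Z. F as bs zs) = (\<Sum>as\<in>Al. \<Sum>zs\<in>Z. \<Sum>bs\<in>B. F as bs zs)"
        by (rule sum.cong[OF refl], rule sum.swap)
      also have "\<dots> = (\<Sum>zs\<in>Z. \<Sum>as\<in>Al. \<Sum>bs\<in>B. F as bs zs)" by (rule sum.swap)
      finally show ?thesis .
    qed
    show ?thesis by (rule sum.cong[OF refl], rule s2)
  qed
  also have "\<dots> = tprod A n t (tprod A n u v) ys"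
    unfolding tprod_def by (simp add: sum_distrib_left sum_distrib_right mult_ac)
  finally show ?thesis .
qed

lemma tprod_unit:
  assumes "length ys = n"
  shows "tprod A n t (itcomul A n (hone A)) ys = t ys"
proof -
  let ?L = "{xs::'i list. length xs = n}"
  have "tprod A n t (itcomul A n (hone A)) ys =
    (\<Sum>xs\<in>?L. t xs * (\<Sum>zs\<in>?L. \<Prod>j<n. sunit A (zs!j) * smul A (xs!j) (zs!j) (ys!j)))"
    unfolding tprod_def itc_one[OF H] by (simp add: sum_distrib_left prod.distrib mult_ac)
  also have "\<dots> = (\<Sum>xs\<in>?L. t xs * (\<Prod>j<n. (if xs!j = ys!j then 1 else 0)))"
    by (simp add: prod_sum_L[where g = "\<lambda>j z. sunit A z * smul A (xs!j) z (ys!j)" for xs] F_unit_right[OF H])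
  also have "\<dots> = t ys" using sum_delta_L[OF assms] .
  finally show ?thesis .
qed

lemma itc_add_fun: "itcomul A n (\<lambda>a. h a + h' a) = (\<lambda>zs. itcomul A n h zs + itcomul A n h' zs)"
  by (simp add: fun_eq_iff itc_add)

lemma Htens_rmodule: "rmodule A (Htens A n)"
proof -
  have act_car: "\<And>u h. \<forall>xs. length xs \<noteq> n \<longrightarrow> tact A n u h xs = 0" by (simp add: tact_def)
  have act_add: "\<And>s t h. tact A n (\<lambda>xs. s xs + t xs) h = (\<lambda>xs. tact A n s h xs + tact A n t h xs)"
    by (simp add: tact_tprod tprod_add_left fun_eq_iff)
  have act_hadd: "\<And>u h h'. tact A n u (\<lambda>a. h a + h' a) = (\<lambda>xs. tact A n u h xs + tact A n u h' xs)"
    by (simp add: tact_tprod itc_add_fun tprod_add_right fun_eq_iff)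
  have act_mult: "\<And>u h h'. tact A n u (hmult A h h') = tact A n (tact A n u h) h'"
  proof -
    fix u h h'
    show "tact A n u (hmult A h h') = tact A n (tact A n u h) h'"
    proof (rule ext)
      fix ys :: "'i list"
      show "tact A n u (hmult A h h') ys = tact A n (tact A n u h) h' ys"
      proof (cases "length ys = n")
        case True
        have "tprod A n u (itcomul A n (hmult A h h')) ys = tprod A n u (tprod A n (itcomul A n h) (itcomul A n h')) ys"
          by (rule tprod_cong) (auto simp: itc_mult[OF H])
        also have "\<dots> = tprod A n (tprod A n u (itcomul A n h)) (itcomul A n h') ys"
          using tprod_assoc[OF True] by simp
        also have "\<dots> = tprod A n (tact A n u h) (itcomul A n h') ys"
          by (rule tprod_cong) (auto simp: tact_tprod)
        finally show ?thesis using True by (simp add: tact_tprod)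
      qed (simp add: tact_def)
    qed
  qed
  have act_one: "\<And>u. \<forall>xs. length xs \<noteq> n \<longrightarrow> u xs = 0 \<Longrightarrow> tact A n u (hone A) = u"
  proof (rule ext)
    fix u :: "'i list \<Rightarrow> 'k" and ys assume u: "\<forall>xs. length xs \<noteq> n \<longrightarrow> u xs = 0"
    show "tact A n u (hone A) ys = u ys"
      using u by (cases "length ys = n") (auto simp: tact_tprod tprod_unit)
  qed
  show ?thesis
    unfolding rmodule_def Htens_def
    apply (simp add: act_car act_add act_hadd act_mult act_one add.assoc add.commute)
    apply (rule conjI)
     apply (simp add: fun_eq_iff ac_simps)
    apply (intro allI impI, rule_tac x="\<lambda>xs. - u xs" in exI, simp add: fun_eq_iff)
    done
qed

end

lemma sum_lessThan_add: "(\<Sum>j<m+(m'::nat). f j) = (\<Sum>j<m. f j) + (\<Sum>j<m'. (f (m+j)::'a::comm_monoid_add))"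
  by (induction m') (simp_all add: add_ac)

lemma hmult_sum_left: "hmult A (\<lambda>c. \<Sum>j\<in>S. x j c) y = (\<lambda>c. \<Sum>j\<in>S. hmult A (x j) y c)"
  unfolding hmult_def by (simp add: sum_distrib_right fun_eq_iff sum.swap[of _ S])

lemma hmult_smult_right: "hmult A x (\<lambda>a. c * y a) = (\<lambda>b. c * hmult A x y b)"
  unfolding hmult_def by (simp add: sum_distrib_left fun_eq_iff mult_ac)

lemma hmult_smult_left: "hmult A (\<lambda>a. c * x a) y = (\<lambda>b. c * hmult A x y b)"
  unfolding hmult_def by (simp add: sum_distrib_left fun_eq_iff mult_ac)

lemma hmult_add_left: "hmult A (\<lambda>a. x a + x' a) y = (\<lambda>b. hmult A x y b + hmult A x' y b)"
  unfolding hmult_def by (simp add: distrib_right sum.distrib fun_eq_iff)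

lemma hmult_add_right: "hmult A x (\<lambda>a. y a + y' a) = (\<lambda>b. hmult A x y b + hmult A x y' b)"
  unfolding hmult_def by (simp add: distrib_left distrib_right sum.distrib fun_eq_iff)

lemma RplusH_zero: "(\<lambda>_. 0) \<in> RplusH A R"
  unfolding RplusH_def by (rule CollectI, rule exI[of _ 0]) auto

lemma RplusH_smult: "x \<in> RplusH A R \<Longrightarrow> (\<lambda>a. c * x a) \<in> RplusH A R"
proof -
  assume "x \<in> RplusH A R"
  then obtain n :: nat and f g where fg: "\<forall>j<n. f j \<in> R \<and> hcounit A (f j) = 0" and x: "x = (\<lambda>c. \<Sum>j<n. hmult A (f j) (g j) c)"
    unfolding RplusH_def mem_Collect_eq by blast
  have "(\<lambda>a. c * x a) = (\<lambda>a. \<Sum>j<n. hmult A (f j) (\<lambda>b. c * g j b) a)"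
    unfolding x hmult_smult_right by (simp add: sum_distrib_left)
  thus ?thesis using fg unfolding RplusH_def mem_Collect_eq by (intro exI[of _ n] exI[of _ f] exI[of _ "\<lambda>j b. c * g j b"] conjI) auto
qed

lemma RplusH_add: "x \<in> RplusH A R \<Longrightarrow> y \<in> RplusH A R \<Longrightarrow> (\<lambda>a. x a + y a) \<in> RplusH A R"
proof -
  assume "x \<in> RplusH A R" "y \<in> RplusH A R"
  then obtain n m :: nat and f g f' g' where fg: "\<forall>j<n. f j \<in> R \<and> hcounit A (f j) = 0" and x: "x = (\<lambda>c. \<Sum>j<n. hmult A (f j) (g j) c)"
    and fg': "\<forall>j<m. f' j \<in> R \<and> hcounit A (f' j) = 0" and y: "y = (\<lambda>c. \<Sum>j<m. hmult A (f' j) (g' j) c)"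
    unfolding RplusH_def mem_Collect_eq by blast
  define F where "F j = (if j < n then f j else f' (j - n))" for j
  define G where "G j = (if j < n then g j else g' (j - n))" for j
  have "(\<lambda>a. x a + y a) = (\<lambda>c. \<Sum>j<n+m. hmult A (F j) (G j) c)"
    unfolding x y sum_lessThan_add F_def G_def by simp
  moreover have "\<forall>j<n+m. F j \<in> R \<and> hcounit A (F j) = 0" using fg fg' unfolding F_def by auto
  ultimately show ?thesis unfolding RplusH_def mem_Collect_eq by (intro exI[of _ "n+m"] exI[of _ F] exI[of _ G] conjI) auto
qed

lemma (in -) RplusH_rmult:
  assumes H: "hopf_algebra A" and x: "x \<in> RplusH A R"
  shows "hmult A x h \<in> RplusH A R"
proof -
  obtain n :: nat and f g where fg: "\<forall>j<n. f j \<in> R \<and> hcounit A (f j) = 0" and x: "x = (\<lambda>c. \<Sum>j<n. hmult A (f j) (g j) c)"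
    using x unfolding RplusH_def mem_Collect_eq by blast
  have "hmult A x h = (\<lambda>c. \<Sum>j<n. hmult A (f j) (hmult A (g j) h) c)"
    unfolding x hmult_sum_left F_hmult_assoc[OF H] ..
  thus ?thesis using fg unfolding RplusH_def mem_Collect_eq by (intro exI[of _ n] exI[of _ f] exI[of _ "\<lambda>j. hmult A (g j) h"] conjI) auto
qed

lemma tprod_sum_left: "tprod A n (\<lambda>xs. \<Sum>j\<in>S. f j xs) s ys = (\<Sum>j\<in>S. tprod A n (f j) s ys)"
proof -
  have "tprod A n (\<lambda>xs. \<Sum>j\<in>S. f j xs) s ys =
     (\<Sum>xs\<in>{xs. length xs = n}. \<Sum>zs\<in>{zs. length zs = n}. \<Sum>j\<in>S. f j xs * s zs * (\<Prod>i<n. smul A (xs!i) (zs!i) (ys!i)))"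
    unfolding tprod_def by (simp add: sum_distrib_right)
  also have "\<dots> = (\<Sum>j\<in>S. tprod A n (f j) s ys)"
    unfolding tprod_def by (rule sum_swap3)
  finally show ?thesis .
qed

lemma ptens_len: "length xs \<noteq> length F \<Longrightarrow> ptens F xs = 0"
  by (simp add: ptens_def)

lemma Kn_car: "t \<in> Kn A R n \<Longrightarrow> length xs \<noteq> n \<Longrightarrow> t xs = 0"
  unfolding Kn_def by (auto simp: ptens_len)

lemma Kn_zero: "(\<lambda>xs. 0) \<in> Kn A R n"
  unfolding Kn_def mem_Collect_eq by (intro exI[of _ 0]) auto

lemma Kn_add: "s \<in> Kn A R n \<Longrightarrow> t \<in> Kn A R n \<Longrightarrow> (\<lambda>xs. s xs + t xs) \<in> Kn A R n"
proof -
  assume "s \<in> Kn A R n" "t \<in> Kn A R n"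
  then obtain m m' :: nat and F F' where F: "\<forall>j<m. length (F j) = n \<and> (\<exists>i<n. F j ! i \<in> RplusH A R)"
     and s: "s = (\<lambda>xs. \<Sum>j<m. ptens (F j) xs)"
     and F': "\<forall>j<m'. length (F' j) = n \<and> (\<exists>i<n. F' j ! i \<in> RplusH A R)"
     and t: "t = (\<lambda>xs. \<Sum>j<m'. ptens (F' j) xs)"
    unfolding Kn_def mem_Collect_eq by blast
  define G where "G j = (if j < m then F j else F' (j - m))" for j
  have "(\<lambda>xs. s xs + t xs) = (\<lambda>xs. \<Sum>j<m+m'. ptens (G j) xs)"
    unfolding s t sum_lessThan_add G_def by simp
  moreover have "\<forall>j<m+m'. length (G j) = n \<and> (\<exists>i<n. G j ! i \<in> RplusH A R)"
    using F F' unfolding G_def by auto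
  ultimately show ?thesis unfolding Kn_def mem_Collect_eq by (intro exI[of _ "m+m'"] exI[of _ G] conjI) auto
qed

lemma Kn_single: "length F = n \<Longrightarrow> i < n \<Longrightarrow> F!i \<in> RplusH A R \<Longrightarrow> ptens F \<in> Kn A R n"
  unfolding Kn_def mem_Collect_eq by (intro exI[of _ 1] exI[of _ "\<lambda>_. F"] conjI) auto

lemma Kn_sum: "finite S \<Longrightarrow> (\<forall>j\<in>S. f j \<in> Kn A R n) \<Longrightarrow> (\<lambda>xs. \<Sum>j\<in>S. f j xs) \<in> Kn A R n"
proof (induction S rule: finite_induct)
  case empty thus ?case using Kn_zero by simp
next
  case (insert x F)
  thus ?case using Kn_add[of "f x" A R n "\<lambda>xs. \<Sum>j\<in>F. f j xs"] by simp
qed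

lemma ptens_scale:
  assumes "i < length F"
  shows "ptens (F[i := (\<lambda>a. c * (F!i) a)]) = (\<lambda>xs. c * ptens F xs)"
proof (rule ext)
  fix xs
  show "ptens (F[i := (\<lambda>a. c * (F!i) a)]) xs = c * ptens F xs"
  proof (cases "length xs = length F")
    case True
    have fin: "finite {..<length F}" and mem: "i \<in> {..<length F}" using assms by auto
    have "(\<Prod>j<length F. (F[i := (\<lambda>a. c * (F!i) a)] ! j) (xs!j))
        = (c * (F!i) (xs!i)) * (\<Prod>j\<in>{..<length F} - {i}. (F ! j) (xs!j))"
      using assms by (simp add: prod.remove[OF fin mem])
    also have "\<dots> = c * (\<Prod>j<length F. (F ! j) (xs!j))"
      by (simp add: prod.remove[OF fin mem])
    finally show ?thesis using True by (simp add: ptens_def)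
  qed (simp add: ptens_def)
qed

lemma Kn_smult: "t \<in> Kn A R n \<Longrightarrow> (\<lambda>xs. c * t xs) \<in> Kn A R n"
proof -
  assume "t \<in> Kn A R n"
  then obtain m :: nat and F where F: "\<forall>j<m. length (F j) = n \<and> (\<exists>i<n. F j ! i \<in> RplusH A R)"
     and t: "t = (\<lambda>xs. \<Sum>j<m. ptens (F j) xs)"
    unfolding Kn_def mem_Collect_eq by blast
  have "\<forall>j\<in>{..<m}. (\<lambda>xs. c * ptens (F j) xs) \<in> Kn A R n"
  proof
    fix j assume "j \<in> {..<m}"
    then obtain i where i: "i < n" "F j ! i \<in> RplusH A R" and len: "length (F j) = n" using F by auto
    have "(\<lambda>xs. c * ptens (F j) xs) = ptens ((F j)[i := (\<lambda>a. c * (F j ! i) a)])"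
      using ptens_scale[of i "F j" c] i len by simp
    moreover have "ptens ((F j)[i := (\<lambda>a. c * (F j ! i) a)]) \<in> Kn A R n"
      by (rule Kn_single[of _ _ i]) (use i len RplusH_smult in auto)
    ultimately show "(\<lambda>xs. c * ptens (F j) xs) \<in> Kn A R n" by simp
  qed
  from Kn_sum[OF _ this] show ?thesis unfolding t by (simp add: sum_distrib_left)
qed

lemma tact_ptens:
  assumes "length F = n"
  shows "tact A n (ptens F) h = (\<lambda>ys. \<Sum>zs\<in>{zs. length zs = n}. itcomul A n h zs * ptens (map (\<lambda>j. hmult A (F!j) (basis_vec (zs!j))) [0..<n]) ys)"
proof (rule ext)
  fix ys
  show "tact A n (ptens F) h ys = (\<Sum>zs\<in>{zs. length zs = n}. itcomul A n h zs * ptens (map (\<lambda>j. hmult A (F!j) (basis_vec (zs!j))) [0..<n]) ys)"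
  proof (cases "length ys = n")
    case True
    have hb: "hmult A f (basis_vec z) y = (\<Sum>x\<in>UNIV. f x * smul A x z y)" for f z y
      unfolding hmult_def by (simp add: bsimps cong: if_cong)
    have "tact A n (ptens F) h ys = (\<Sum>xs\<in>{xs. length xs = n}. \<Sum>zs\<in>{zs. length zs = n}.
        itcomul A n h zs * (\<Prod>j<n. (F!j) (xs!j) * smul A (xs!j) (zs!j) (ys!j)))"
      using True assms unfolding tact_tprod tprod_def by (auto simp: ptens_def prod.distrib mult_ac intro!: sum.cong)
    also have "\<dots> = (\<Sum>zs\<in>{zs. length zs = n}. itcomul A n h zs * (\<Sum>xs\<in>{xs. length xs = n}. \<Prod>j<n. (F!j) (xs!j) * smul A (xs!j) (zs!j) (ys!j)))"
      by (subst sum.swap) (simp add: sum_distrib_left)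
    also have "\<dots> = (\<Sum>zs\<in>{zs. length zs = n}. itcomul A n h zs * (\<Prod>j<n. hmult A (F!j) (basis_vec (zs!j)) (ys!j)))"
      by (simp add: prod_sum_L[where g = "\<lambda>j x. (F!j) x * smul A x (zs!j) (ys!j)" for zs] hb)
    also have "\<dots> = (\<Sum>zs\<in>{zs. length zs = n}. itcomul A n h zs * ptens (map (\<lambda>j. hmult A (F!j) (basis_vec (zs!j))) [0..<n]) ys)"
      using True by (intro sum.cong refl) (simp add: ptens_def)
    finally show ?thesis .
  next
    case False
    thus ?thesis using assms by (simp add: tact_def ptens_def)
  qed
qed

lemma Kn_act:
  assumes H: "hopf_algebra A" and t: "t \<in> Kn A R n"
  shows "tact A n t h \<in> Kn A R n"
proof -
  obtain m :: nat and F where F: "\<forall>j<m. length (F j) = n \<and> (\<exists>i<n. F j ! i \<in> RplusH A R)"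
     and t: "t = (\<lambda>xs. \<Sum>j<m. ptens (F j) xs)"
    using t unfolding Kn_def mem_Collect_eq by blast
  have eq: "tact A n t h = (\<lambda>ys. \<Sum>j<m. tact A n (ptens (F j)) h ys)"
    unfolding t by (simp add: tact_tprod tprod_sum_left fun_eq_iff)
  have "\<forall>j\<in>{..<m}. tact A n (ptens (F j)) h \<in> Kn A R n"
  proof
    fix j assume "j \<in> {..<m}"
    then obtain i where i: "i < n" "F j ! i \<in> RplusH A R" and len: "length (F j) = n" using F by auto
    have "\<forall>zs\<in>{zs. length zs = n}. (\<lambda>ys. itcomul A n h zs * ptens (map (\<lambda>l. hmult A (F j!l) (basis_vec (zs!l))) [0..<n]) ys) \<in> Kn A R n"
    proof
      fix zs
      have "ptens (map (\<lambda>l. hmult A (F j!l) (basis_vec (zs!l))) [0..<n]) \<in> Kn A R n"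
        by (rule Kn_single[of _ _ i]) (use i RplusH_rmult[OF H] in auto)
      thus "(\<lambda>ys. itcomul A n h zs * ptens (map (\<lambda>l. hmult A (F j!l) (basis_vec (zs!l))) [0..<n]) ys) \<in> Kn A R n"
        by (rule Kn_smult)
    qed
    from Kn_sum[OF finite_L this] show "tact A n (ptens (F j)) h \<in> Kn A R n"
      unfolding tact_ptens[OF len] .
  qed
  from Kn_sum[OF _ this] show ?thesis unfolding eq by simp
qed

lemma Kn_submod:
  assumes H: "hopf_algebra A"
  shows "submod (Kn A R n) (Htens A n)"
  unfolding submod_def
proof (intro conjI ballI allI)
  show "Kn A R n \<subseteq> mcar (Htens A n)" by (auto simp: Htens_def Kn_car)
  show "mzero (Htens A n) \<in> Kn A R n" by (simp add: Htens_def Kn_zero)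
  show "madd (Htens A n) u v \<in> Kn A R n" if "u \<in> Kn A R n" "v \<in> Kn A R n" for u v
    using Kn_add[OF that] by (simp add: Htens_def)
  show "\<exists>w\<in>Kn A R n. madd (Htens A n) u w = mzero (Htens A n)" if "u \<in> Kn A R n" for u
    using Kn_smult[OF that, of "-1"] by (intro bexI[of _ "\<lambda>xs. -1 * u xs"]) (auto simp: Htens_def)
  show "mact (Htens A n) u h \<in> Kn A R n" if "u \<in> Kn A R n" for u h
    using Kn_act[OF H that] by (simp add: Htens_def)
qed

definition mneg :: "('h, 'v, 'z) rmod_scheme \<Rightarrow> 'v \<Rightarrow> 'v" where
  "mneg M u = (SOME w. w \<in> mcar M \<and> madd M u w = mzero M)"

fun msum :: "('h, 'v, 'z) rmod_scheme \<Rightarrow> (nat \<Rightarrow> 'v) \<Rightarrow> nat \<Rightarrow> 'v" where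
  "msum M f 0 = mzero M"
| "msum M f (Suc d) = madd M (msum M f d) (f d)"

lemma msum_cong: "(\<And>i. i < d \<Longrightarrow> f i = g i) \<Longrightarrow> msum M f d = msum M g d"
  by (induction d) auto

definition hsc :: "('k::field,'i::finite) hopf_data \<Rightarrow> 'k \<Rightarrow> ('i \<Rightarrow> 'k)" where
  "hsc A c = (\<lambda>a. c * hone A a)"

lemma hmult_sc_left: "hopf_algebra A \<Longrightarrow> hmult A (hsc A c) h = (\<lambda>a. c * h a)"
  unfolding hsc_def hmult_smult_left by (simp add: F_hmult_one_left)

lemma hmult_sc_right: "hopf_algebra A \<Longrightarrow> hmult A h (hsc A c) = (\<lambda>a. c * h a)"
  unfolding hsc_def hmult_smult_right by (simp add: F_hmult_one_right)

locale rmodl =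
  fixes A :: "('k::field,'i::finite) hopf_data" and M :: "('i \<Rightarrow> 'k, 'v, 'z) rmod_scheme"
  assumes H: "hopf_algebra A" and RM: "rmodule A M"
begin

lemmas RMD = RM[unfolded rmodule_def]
lemma add_closed: "u \<in> mcar M \<Longrightarrow> v \<in> mcar M \<Longrightarrow> madd M u v \<in> mcar M"
  using RMD[THEN conjunct1] by blast
lemma zero_closed: "mzero M \<in> mcar M"
  using RMD[THEN conjunct2, THEN conjunct1] by blast
lemma add_assoc: "u \<in> mcar M \<Longrightarrow> v \<in> mcar M \<Longrightarrow> w \<in> mcar M \<Longrightarrow> madd M (madd M u v) w = madd M u (madd M v w)"
  using RMD[THEN conjunct2, THEN conjunct2, THEN conjunct1] by blast
lemma add_comm: "u \<in> mcar M \<Longrightarrow> v \<in> mcar M \<Longrightarrow> madd M u v = madd M v u"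
  using RMD[THEN conjunct2, THEN conjunct2, THEN conjunct2, THEN conjunct1] by blast
lemma zero_add: "u \<in> mcar M \<Longrightarrow> madd M (mzero M) u = u"
  using RMD[THEN conjunct2, THEN conjunct2, THEN conjunct2, THEN conjunct2, THEN conjunct1] by blast
lemma ex_neg: "u \<in> mcar M \<Longrightarrow> \<exists>w\<in>mcar M. madd M u w = mzero M"
  using RMD[THEN conjunct2, THEN conjunct2, THEN conjunct2, THEN conjunct2, THEN conjunct2, THEN conjunct1] by blast
lemma act_closed: "u \<in> mcar M \<Longrightarrow> mact M u h \<in> mcar M"
  using RMD[THEN conjunct2, THEN conjunct2, THEN conjunct2, THEN conjunct2, THEN conjunct2, THEN conjunct2, THEN conjunct1] by blast
lemma act_add: "u \<in> mcar M \<Longrightarrow> v \<in> mcar M \<Longrightarrow> mact M (madd M u v) h = madd M (mact M u h) (mact M v h)"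
  using RMD[THEN conjunct2, THEN conjunct2, THEN conjunct2, THEN conjunct2, THEN conjunct2, THEN conjunct2, THEN conjunct2, THEN conjunct1] by blast
lemma act_hadd: "u \<in> mcar M \<Longrightarrow> mact M u (\<lambda>a. h a + h' a) = madd M (mact M u h) (mact M u h')"
  using RMD[THEN conjunct2, THEN conjunct2, THEN conjunct2, THEN conjunct2, THEN conjunct2, THEN conjunct2, THEN conjunct2, THEN conjunct2, THEN conjunct1] by blast
lemma act_mult: "u \<in> mcar M \<Longrightarrow> mact M u (hmult A h h') = mact M (mact M u h) h'"
  using RMD[THEN conjunct2, THEN conjunct2, THEN conjunct2, THEN conjunct2, THEN conjunct2, THEN conjunct2, THEN conjunct2, THEN conjunct2, THEN conjunct2, THEN conjunct1] by blast
lemma act_one: "u \<in> mcar M \<Longrightarrow> mact M u (hone A) = u"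
  using RMD[THEN conjunct2, THEN conjunct2, THEN conjunct2, THEN conjunct2, THEN conjunct2, THEN conjunct2, THEN conjunct2, THEN conjunct2, THEN conjunct2, THEN conjunct2] by blast

lemma add_zero: "u \<in> mcar M \<Longrightarrow> madd M u (mzero M) = u"
  using add_comm zero_add zero_closed by metis

lemma neg_closed: "u \<in> mcar M \<Longrightarrow> mneg M u \<in> mcar M"
  and add_neg: "u \<in> mcar M \<Longrightarrow> madd M u (mneg M u) = mzero M"
  using someI_ex[OF ex_neg[unfolded Bex_def]] unfolding mneg_def by blast+

lemma neg_add: "u \<in> mcar M \<Longrightarrow> madd M (mneg M u) u = mzero M"
  using add_neg add_comm neg_closed by metis

lemma add_left_cancel:
  assumes "u \<in> mcar M" "v \<in> mcar M" "w \<in> mcar M" "madd M u v = madd M u w"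
  shows "v = w"
proof -
  have "v = madd M (madd M (mneg M u) u) v" using assms neg_add zero_add by simp
  also have "\<dots> = madd M (mneg M u) (madd M u v)" using assms add_assoc neg_closed by simp
  also have "\<dots> = madd M (mneg M u) (madd M u w)" using assms by simp
  also have "\<dots> = madd M (madd M (mneg M u) u) w" using assms add_assoc neg_closed by simp
  also have "\<dots> = w" using assms neg_add zero_add by simp
  finally show ?thesis .
qed

lemma neg_unique: "u \<in> mcar M \<Longrightarrow> w \<in> mcar M \<Longrightarrow> madd M u w = mzero M \<Longrightarrow> w = mneg M u"
  using add_left_cancel[of u w "mneg M u"] add_neg neg_closed by simp

lemma act_zero_h: "u \<in> mcar M \<Longrightarrow> mact M u (\<lambda>_. 0) = mzero M"
proof -
  assume u: "u \<in> mcar M"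
  have "madd M (mact M u (\<lambda>_. 0)) (mact M u (\<lambda>_. 0)) = madd M (mact M u (\<lambda>_. 0)) (mzero M)"
    using act_hadd[OF u, of "\<lambda>_. 0" "\<lambda>_. 0"] add_zero act_closed u by simp
  thus ?thesis using add_left_cancel act_closed zero_closed u by blast
qed

lemma zero_act: "mact M (mzero M) h = mzero M"
proof -
  have "madd M (mact M (mzero M) h) (mact M (mzero M) h) = madd M (mact M (mzero M) h) (mzero M)"
    using act_add[OF zero_closed zero_closed, of h] zero_add[OF zero_closed] add_zero act_closed zero_closed by simp
  thus ?thesis using add_left_cancel act_closed zero_closed by blast
qed

lemma act_neg_h: "u \<in> mcar M \<Longrightarrow> mact M u (\<lambda>a. - h a) = mneg M (mact M u h)"
proof -
  assume u: "u \<in> mcar M"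
  have "madd M (mact M u h) (mact M u (\<lambda>a. - h a)) = mzero M"
    using act_hadd[OF u, of h "\<lambda>a. - h a"] act_zero_h[OF u] by simp
  thus ?thesis using neg_unique act_closed u by blast
qed

lemma act_sc_comm: "u \<in> mcar M \<Longrightarrow> mact M (mact M u (hsc A c)) h = mact M (mact M u h) (hsc A c)"
  using act_mult[symmetric] hmult_sc_left[OF H] hmult_sc_right[OF H] by metis

lemma add_swap4: "a \<in> mcar M \<Longrightarrow> b \<in> mcar M \<Longrightarrow> c \<in> mcar M \<Longrightarrow> d \<in> mcar M \<Longrightarrow>
   madd M (madd M a b) (madd M c d) = madd M (madd M a c) (madd M b d)"
  by (metis add_assoc add_comm add_closed)

lemma msum_closed: "(\<And>i. i < d \<Longrightarrow> f i \<in> mcar M) \<Longrightarrow> msum M f d \<in> mcar M"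
  by (induction d) (auto intro: add_closed zero_closed)

lemma msum_act: "(\<And>i. i < d \<Longrightarrow> f i \<in> mcar M) \<Longrightarrow> mact M (msum M f d) h = msum M (\<lambda>i. mact M (f i) h) d"
  by (induction d) (auto simp: zero_act act_add msum_closed)

lemma msum_add: "(\<And>i. i < d \<Longrightarrow> f i \<in> mcar M) \<Longrightarrow> (\<And>i. i < d \<Longrightarrow> g i \<in> mcar M) \<Longrightarrow>
   msum M (\<lambda>i. madd M (f i) (g i)) d = madd M (msum M f d) (msum M g d)"
  by (induction d) (auto simp: zero_add zero_closed add_swap4 msum_closed)

lemma msum_zero: "msum M (\<lambda>i. mzero M) d = mzero M"
  by (induction d) (auto simp: zero_add zero_closed)

end


lemma msum_dsum: "msum (dsum m M) F d = (\<lambda>l. msum M (\<lambda>i. F i l) d)"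
  by (induction d) (auto simp: dsum_def)

lemma rhom_comp: "rhom M N f \<Longrightarrow> rhom N P g \<Longrightarrow> rhom M P (g \<circ> f)"
  unfolding rhom_def by auto

lemma riso_trans: "riso M N \<Longrightarrow> riso N P \<Longrightarrow> riso M P"
  unfolding riso_def using rhom_comp bij_betw_trans by metis

lemma dsum_rmodule:
  assumes "rmodl A M"
  shows "rmodule A (dsum m M)"
proof -
  interpret rmodl A M by fact
  have car: "u \<in> mcar (dsum m M) \<longleftrightarrow> (\<forall>j<m. u j \<in> mcar M) \<and> (\<forall>j\<ge>m. u j = mzero M)" for u
    by (simp add: dsum_def)
  have C: "u \<in> mcar (dsum m M) \<Longrightarrow> (j < m \<Longrightarrow> u j \<in> mcar M \<Longrightarrow> P) \<Longrightarrow> (j \<ge> m \<Longrightarrow> u j = mzero M \<Longrightarrow> P) \<Longrightarrow> P" for u j P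
    by (cases "j < m") (auto simp: car)
  show ?thesis unfolding rmodule_def
  proof (intro conjI ballI allI)
    show "madd (dsum m M) u v \<in> mcar (dsum m M)" if "u \<in> mcar (dsum m M)" "v \<in> mcar (dsum m M)" for u v
      using that by (auto simp: dsum_def add_closed zero_add zero_closed)
    show "mzero (dsum m M) \<in> mcar (dsum m M)" by (auto simp: dsum_def zero_closed)
    show "madd (dsum m M) (madd (dsum m M) u v) w = madd (dsum m M) u (madd (dsum m M) v w)"
      if u: "u \<in> mcar (dsum m M)" and v: "v \<in> mcar (dsum m M)" and w: "w \<in> mcar (dsum m M)" for u v w
    proof -
      have "madd M (madd M (u j) (v j)) (w j) = madd M (u j) (madd M (v j) (w j))" for j
        by (rule C[OF u, of j]; rule C[OF v, of j]; rule C[OF w, of j]) (auto simp: add_assoc zero_add zero_closed)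
      thus ?thesis by (simp add: dsum_def)
    qed
    show "madd (dsum m M) u v = madd (dsum m M) v u" if u: "u \<in> mcar (dsum m M)" and v: "v \<in> mcar (dsum m M)" for u v
    proof -
      have "madd M (u j) (v j) = madd M (v j) (u j)" for j
        by (rule C[OF u, of j]; rule C[OF v, of j]) (auto simp: add_comm zero_add zero_closed)
      thus ?thesis by (simp add: dsum_def)
    qed
    show "madd (dsum m M) (mzero (dsum m M)) u = u" if u: "u \<in> mcar (dsum m M)" for u
    proof -
      have "madd M (mzero M) (u j) = u j" for j
        by (rule C[OF u, of j]) (auto simp: zero_add zero_closed)
      thus ?thesis by (simp add: dsum_def)
    qed
    show "\<exists>w\<in>mcar (dsum m M). madd (dsum m M) u w = mzero (dsum m M)" if u: "u \<in> mcar (dsum m M)" for u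
    proof (rule bexI[of _ "\<lambda>j. if j < m then mneg M (u j) else mzero M"])
      have "madd M (u j) (if j < m then mneg M (u j) else mzero M) = mzero M" for j
        by (rule C[OF u, of j]) (auto simp: add_neg zero_add zero_closed)
      thus "madd (dsum m M) u (\<lambda>j. if j < m then mneg M (u j) else mzero M) = mzero (dsum m M)"
        by (simp add: dsum_def fun_eq_iff)
      show "(\<lambda>j. if j < m then mneg M (u j) else mzero M) \<in> mcar (dsum m M)"
        using u by (auto simp: car neg_closed)
    qed
    show "mact (dsum m M) u h \<in> mcar (dsum m M)" if "u \<in> mcar (dsum m M)" for u h
      using that by (auto simp: dsum_def act_closed zero_act)
    show "mact (dsum m M) (madd (dsum m M) u v) h = madd (dsum m M) (mact (dsum m M) u h) (mact (dsum m M) v h)"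
      if u: "u \<in> mcar (dsum m M)" and v: "v \<in> mcar (dsum m M)" for u v h
    proof -
      have "mact M (madd M (u j) (v j)) h = madd M (mact M (u j) h) (mact M (v j) h)" for j
        by (rule C[OF u, of j]; rule C[OF v, of j]) (auto simp: act_add zero_add zero_closed zero_act)
      thus ?thesis by (simp add: dsum_def)
    qed
    show "mact (dsum m M) u (\<lambda>a. h a + h' a) = madd (dsum m M) (mact (dsum m M) u h) (mact (dsum m M) u h')"
      if u: "u \<in> mcar (dsum m M)" for u h h'
    proof -
      have "mact M (u j) (\<lambda>a. h a + h' a) = madd M (mact M (u j) h) (mact M (u j) h')" for j
        by (rule C[OF u, of j]) (auto simp: act_hadd zero_add zero_closed zero_act)
      thus ?thesis by (simp add: dsum_def)
    qed
    show "mact (dsum m M) u (hmult A h h') = mact (dsum m M) (mact (dsum m M) u h) h'" if u: "u \<in> mcar (dsum m M)" for u h h'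
    proof -
      have "mact M (u j) (hmult A h h') = mact M (mact M (u j) h) h'" for j
        by (rule C[OF u, of j]) (auto simp: act_mult zero_act)
      thus ?thesis by (simp add: dsum_def)
    qed
    show "mact (dsum m M) u (hone A) = u" if u: "u \<in> mcar (dsum m M)" for u
    proof -
      have "mact M (u j) (hone A) = u j" for j
        by (rule C[OF u, of j]) (auto simp: act_one zero_act)
      thus ?thesis by (simp add: dsum_def)
    qed
  qed
qed


lemma quot_sel:
  "mcar (quot M W) = mcoset M W ` mcar M"
  "madd (quot M W) C D = {madd M c d | c d. c \<in> C \<and> d \<in> D}"
  "mzero (quot M W) = W"
  "mact (quot M W) C h = {madd M (mact M c h) w | c w. c \<in> C \<and> w \<in> W}"
  by (simp_all add: quot_def)

locale qmod = rmodl A M for A :: "('k::field,'i::finite) hopf_data" and M :: "('i \<Rightarrow> 'k, 'v) rmod" +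
  fixes W assumes SW: "submod W M"
begin

lemma W_sub: "w \<in> W \<Longrightarrow> w \<in> mcar M" using SW unfolding submod_def by blast
lemma W_zero: "mzero M \<in> W" using SW unfolding submod_def by blast
lemma W_add: "u \<in> W \<Longrightarrow> v \<in> W \<Longrightarrow> madd M u v \<in> W" using SW unfolding submod_def by blast
lemma W_act: "u \<in> W \<Longrightarrow> mact M u h \<in> W" using SW unfolding submod_def by blast
lemma W_neg: "u \<in> W \<Longrightarrow> mneg M u \<in> W"
proof -
  assume u: "u \<in> W"
  then obtain w where "w \<in> W" "madd M u w = mzero M" using SW unfolding submod_def by blast
  thus ?thesis using neg_unique[of u w] W_sub u by blast
qed

lemma coset_mem: "v \<in> mcar M \<Longrightarrow> v \<in> mcoset M W v"
  unfolding mcoset_def using W_zero add_zero by force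

lemma coset_shift: "u \<in> mcar M \<Longrightarrow> w0 \<in> W \<Longrightarrow> mcoset M W (madd M u w0) = mcoset M W u"
proof (rule set_eqI, rule iffI)
  fix x assume u: "u \<in> mcar M" and w0: "w0 \<in> W"
  { assume "x \<in> mcoset M W (madd M u w0)"
    then obtain w where w: "w \<in> W" "x = madd M (madd M u w0) w" unfolding mcoset_def by blast
    hence "x = madd M u (madd M w0 w)" using add_assoc u W_sub w0 by simp
    thus "x \<in> mcoset M W u" unfolding mcoset_def using W_add w0 w by blast }
  { assume "x \<in> mcoset M W u"
    then obtain w where w: "w \<in> W" "x = madd M u w" unfolding mcoset_def by blast
    have "madd M (madd M u w0) (madd M (mneg M w0) w) = madd M u (madd M (madd M w0 (mneg M w0)) w)"
      using u w0 w W_sub neg_closed add_assoc add_closed by simp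
    also have "\<dots> = x" using u w0 w W_sub add_neg zero_add by simp
    finally have "x = madd M (madd M u w0) (madd M (mneg M w0) w)" by simp
    moreover have "madd M (mneg M w0) w \<in> W" using W_add W_neg w0 w by blast
    ultimately show "x \<in> mcoset M W (madd M u w0)" unfolding mcoset_def by blast }
qed

lemma coset_eq_iff:
  assumes u: "u \<in> mcar M" and v: "v \<in> mcar M"
  shows "mcoset M W u = mcoset M W v \<longleftrightarrow> (\<exists>w\<in>W. v = madd M u w)"
proof
  assume "mcoset M W u = mcoset M W v"
  hence "v \<in> mcoset M W u" using coset_mem[OF v] by simp
  thus "\<exists>w\<in>W. v = madd M u w" unfolding mcoset_def by blast
next
  assume "\<exists>w\<in>W. v = madd M u w"
  thus "mcoset M W u = mcoset M W v" using coset_shift u by metis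
qed

lemma coset_zero: "mcoset M W (mzero M) = W"
  unfolding mcoset_def using zero_add W_sub by force

lemma coset_W_iff: "u \<in> mcar M \<Longrightarrow> mcoset M W u = W \<longleftrightarrow> u \<in> W"
proof
  assume u: "u \<in> mcar M" and "mcoset M W u = W"
  thus "u \<in> W" using coset_mem by blast
next
  assume u: "u \<in> mcar M" and "u \<in> W"
  thus "mcoset M W u = W" using coset_shift[OF zero_closed, of u] zero_add coset_zero by simp
qed

lemma coset_add: "u \<in> mcar M \<Longrightarrow> v \<in> mcar M \<Longrightarrow> madd (quot M W) (mcoset M W u) (mcoset M W v) = mcoset M W (madd M u v)"
proof (rule set_eqI, rule iffI)
  fix x assume u: "u \<in> mcar M" and v: "v \<in> mcar M"
  { assume "x \<in> madd (quot M W) (mcoset M W u) (mcoset M W v)"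
    then obtain w1 w2 where w: "w1 \<in> W" "w2 \<in> W" "x = madd M (madd M u w1) (madd M v w2)"
      unfolding quot_sel mcoset_def by blast
    hence "x = madd M (madd M u v) (madd M w1 w2)" using add_swap4 u v W_sub by simp
    thus "x \<in> mcoset M W (madd M u v)" unfolding mcoset_def using W_add w by blast }
  { assume "x \<in> mcoset M W (madd M u v)"
    then obtain w where w: "w \<in> W" "x = madd M (madd M u v) w" unfolding mcoset_def by blast
    have "madd M (madd M u w) v = madd M u (madd M w v)" using add_assoc u v w W_sub by simp
    also have "\<dots> = madd M u (madd M v w)" using add_comm v w W_sub by simp
    also have "\<dots> = x" using add_assoc u v w W_sub by simp
    finally have x: "x = madd M (madd M u w) v" by simp
    have "madd M u w \<in> mcoset M W u" using w unfolding mcoset_def by blast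
    moreover have "v \<in> mcoset M W v" using coset_mem v by blast
    ultimately show "x \<in> madd (quot M W) (mcoset M W u) (mcoset M W v)"
      unfolding quot_sel x by blast }
qed

lemma coset_act: "u \<in> mcar M \<Longrightarrow> mact (quot M W) (mcoset M W u) h = mcoset M W (mact M u h)"
proof (rule set_eqI, rule iffI)
  fix x assume u: "u \<in> mcar M"
  { assume "x \<in> mact (quot M W) (mcoset M W u) h"
    then obtain w1 w where w: "w1 \<in> W" "w \<in> W" "x = madd M (mact M (madd M u w1) h) w"
      unfolding quot_sel mcoset_def by blast
    hence "x = madd M (mact M u h) (madd M (mact M w1 h) w)" using act_add add_assoc u W_sub act_closed by simp
    thus "x \<in> mcoset M W (mact M u h)" unfolding mcoset_def using W_add W_act w by blast }
  { assume "x \<in> mcoset M W (mact M u h)"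
    then obtain w where w: "w \<in> W" "x = madd M (mact M u h) w" unfolding mcoset_def by blast
    moreover have "u \<in> mcoset M W u" using coset_mem u by blast
    ultimately show "x \<in> mact (quot M W) (mcoset M W u) h"
      unfolding quot_sel by blast }
qed

lemma quot_car: "C \<in> mcar (quot M W) \<Longrightarrow> (\<And>u. u \<in> mcar M \<Longrightarrow> C = mcoset M W u \<Longrightarrow> P) \<Longrightarrow> P"
  unfolding quot_sel by blast

lemma quot_carI: "u \<in> mcar M \<Longrightarrow> mcoset M W u \<in> mcar (quot M W)"
  unfolding quot_sel by blast

lemma quot_zero': "mzero (quot M W) = mcoset M W (mzero M)"
  by (simp add: quot_sel coset_zero)

lemma quot_rmodule: "rmodule A (quot M W)"
  unfolding rmodule_def
proof (intro conjI ballI allI)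
  show "madd (quot M W) C D \<in> mcar (quot M W)" if "C \<in> mcar (quot M W)" "D \<in> mcar (quot M W)" for C D
    by (rule quot_car[OF that(1)], rule quot_car[OF that(2)]) (simp add: coset_add add_closed quot_carI)
  show "mzero (quot M W) \<in> mcar (quot M W)"
    unfolding quot_zero' by (rule quot_carI[OF zero_closed])
  show "madd (quot M W) (madd (quot M W) C D) E = madd (quot M W) C (madd (quot M W) D E)"
    if "C \<in> mcar (quot M W)" "D \<in> mcar (quot M W)" "E \<in> mcar (quot M W)" for C D E
    by (rule quot_car[OF that(1)], rule quot_car[OF that(2)], rule quot_car[OF that(3)]) (simp add: coset_add add_closed add_assoc)
  show "madd (quot M W) C D = madd (quot M W) D C" if "C \<in> mcar (quot M W)" "D \<in> mcar (quot M W)" for C D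
    by (rule quot_car[OF that(1)], rule quot_car[OF that(2)]) (simp add: coset_add add_comm)
  show "madd (quot M W) (mzero (quot M W)) C = C" if "C \<in> mcar (quot M W)" for C
    by (rule quot_car[OF that(1)]) (simp add: quot_zero' coset_add zero_closed zero_add)
  show "\<exists>D\<in>mcar (quot M W). madd (quot M W) C D = mzero (quot M W)" if "C \<in> mcar (quot M W)" for C
  proof (rule quot_car[OF that(1)])
    fix u assume u: "u \<in> mcar M" "C = mcoset M W u"
    have "madd (quot M W) C (mcoset M W (mneg M u)) = mzero (quot M W)"
      using u by (simp add: coset_add neg_closed add_neg quot_zero')
    thus ?thesis using u neg_closed quot_carI by blast
  qed
  show "mact (quot M W) C h \<in> mcar (quot M W)" if "C \<in> mcar (quot M W)" for C h
    by (rule quot_car[OF that(1)]) (simp add: coset_act act_closed quot_carI)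
  show "mact (quot M W) (madd (quot M W) C D) h = madd (quot M W) (mact (quot M W) C h) (mact (quot M W) D h)"
    if "C \<in> mcar (quot M W)" "D \<in> mcar (quot M W)" for C D h
    by (rule quot_car[OF that(1)], rule quot_car[OF that(2)]) (simp add: coset_add coset_act add_closed act_closed act_add)
  show "mact (quot M W) C (\<lambda>a. h a + h' a) = madd (quot M W) (mact (quot M W) C h) (mact (quot M W) C h')"
    if "C \<in> mcar (quot M W)" for C h h'
    by (rule quot_car[OF that(1)]) (simp add: coset_add coset_act act_closed act_hadd)
  show "mact (quot M W) C (hmult A h h') = mact (quot M W) (mact (quot M W) C h) h'" if "C \<in> mcar (quot M W)" for C h h'
    by (rule quot_car[OF that(1)]) (simp add: coset_act act_closed act_mult)
  show "mact (quot M W) C (hone A) = C" if "C \<in> mcar (quot M W)" for C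
    by (rule quot_car[OF that(1)]) (simp add: coset_act act_one)
qed

lemma msum_quot: "(\<And>i. i < d \<Longrightarrow> f i \<in> mcar M) \<Longrightarrow> msum (quot M W) (\<lambda>i. mcoset M W (f i)) d = mcoset M W (msum M f d)"
  by (induction d) (simp_all add: quot_zero' coset_add msum_closed)

end

lemma idx_dec:
  assumes "q < m * r * (d::nat)"
  shows "q mod d < d" "q div d div r < m" "q div d mod r < r"
proof -
  have d: "d > 0" using assms by (cases d) auto
  have p: "q div d < m * r" using assms by (simp add: less_mult_imp_div_less)
  have r: "r > 0" using p by (cases r) auto
  show "q mod d < d" using d by simp
  show "q div d div r < m" using p by (simp add: less_mult_imp_div_less)
  show "q div d mod r < r" using r by simp
qed

lemma idx_enc:
  assumes "l < m" "j < r" "i < (d::nat)"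
  shows "(l*r+j)*d+i < m*r*d" "((l*r+j)*d+i) mod d = i" "((l*r+j)*d+i) div d div r = l" "((l*r+j)*d+i) div d mod r = j"
proof -
  have a: "l*r+j < m*r"
  proof -
    have "l*r + j < l*r + r" using assms by simp
    also have "\<dots> = (l+1)*r" by simp
    also have "\<dots> \<le> m*r" using assms by (intro mult_right_mono) auto
    finally show ?thesis .
  qed
  have "(l*r+j)*d+i < (l*r+j)*d + d" using assms by simp
  also have "\<dots> = (l*r+j+1)*d" by simp
  also have "\<dots> \<le> m*r*d" using a by (intro mult_right_mono) auto
  finally show "(l*r+j)*d+i < m*r*d" .
  show "((l*r+j)*d+i) mod d = i" using assms by simp
  have "((l*r+j)*d+i) div d = l*r+j" using assms by simp
  thus "((l*r+j)*d+i) div d div r = l" "((l*r+j)*d+i) div d mod r = j" using assms by simp_all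
qed


lemma sep_from_span:
  assumes H: "hopf_algebra A" and RMM: "rmodule A M" and RMN: "rmodule A N"
    and spanv: "\<forall>i<d. v i \<in> mcar N" "\<forall>u\<in>mcar N. \<exists>c. u = msum N (\<lambda>i. mact N (v i) (hsc A (c i))) d"
    and ann: "\<forall>h. (\<forall>u\<in>mcar N. mact N u h = mzero N) \<longrightarrow> (\<forall>u\<in>mcar M. mact M u h = mzero M)"
    and eq: "\<forall>i<d. mact N (v i) h = mact N (v i) h'"
    and u: "u \<in> mcar M"
  shows "mact M u h = mact M u h'"
proof -
  interpret rM: rmodl A M using H RMM by unfold_locales
  interpret rN: rmodl A N using H RMN by unfold_locales
  define g where "g = (\<lambda>a. h a + - h' a)"
  have vg: "mact N (v i) g = mzero N" if i: "i < d" for i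
  proof -
    have "mact N (v i) g = madd N (mact N (v i) h) (mneg N (mact N (v i) h'))"
      unfolding g_def using rN.act_hadd[of "v i" h "\<lambda>a. - h' a"] rN.act_neg_h[of "v i" h'] spanv(1) i by simp
    also have "\<dots> = mzero N" using eq i rN.add_neg rN.act_closed spanv(1) by simp
    finally show ?thesis .
  qed
  have "\<forall>w\<in>mcar N. mact N w g = mzero N"
  proof
    fix w assume w: "w \<in> mcar N"
    then obtain c where c: "w = msum N (\<lambda>i. mact N (v i) (hsc A (c i))) d" using spanv(2) by blast
    have "mact N w g = msum N (\<lambda>i. mact N (mact N (v i) (hsc A (c i))) g) d"
      unfolding c by (rule rN.msum_act) (use spanv(1) rN.act_closed in auto)
    also have "\<dots> = msum N (\<lambda>i. mzero N) d"
    proof (rule msum_cong)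
      fix i assume i: "i < d"
      have "mact N (mact N (v i) (hsc A (c i))) g = mact N (mact N (v i) g) (hsc A (c i))"
        using rN.act_sc_comm spanv(1) i by blast
      thus "mact N (mact N (v i) (hsc A (c i))) g = mzero N" using vg i rN.zero_act by simp
    qed
    also have "\<dots> = mzero N" by (rule rN.msum_zero)
    finally show "mact N w g = mzero N" .
  qed
  hence ug: "mact M u g = mzero M" using ann u by blast
  have "h = (\<lambda>a. g a + h' a)" unfolding g_def by auto
  hence "mact M u h = madd M (mact M u g) (mact M u h')" using rM.act_hadd u by metis
  thus ?thesis using ug rM.zero_add rM.act_closed u by simp
qed


locale sig_transfer =
  fixes A :: "('k::field,'i::finite) hopf_data" and M :: "('i \<Rightarrow> 'k,'v) rmod" and N :: "('i \<Rightarrow> 'k,'w) rmod"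
    and r d :: nat and x :: "nat \<Rightarrow> 'v" and v :: "nat \<Rightarrow> 'w" and m :: nat
    and W :: "(nat \<Rightarrow> 'v) set" and S :: "(nat \<Rightarrow> 'v) set set"
  assumes H: "hopf_algebra A" and RMM: "rmodule A M" and RMN: "rmodule A N"
    and genx: "\<forall>j<r. x j \<in> mcar M" and gen: "\<forall>u\<in>mcar M. \<exists>hs. u = msum M (\<lambda>j. mact M (x j) (hs j)) r"
    and spanv1: "\<forall>i<d. v i \<in> mcar N" and spanv2: "\<forall>u\<in>mcar N. \<exists>c. u = msum N (\<lambda>i. mact N (v i) (hsc A (c i))) d"
    and ann: "\<forall>h. (\<forall>u\<in>mcar N. mact N u h = mzero N) \<longrightarrow> (\<forall>u\<in>mcar M. mact M u h = mzero M)"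
    and SW: "submod W (dsum m M)" and SS: "submod S (quot (dsum m M) W)"
begin

abbreviation "P \<equiv> dsum m M"
definition "D = m*r*d"
abbreviation "N' \<equiv> dsum D N"

definition Phi :: "(nat \<Rightarrow> nat \<Rightarrow> 'i \<Rightarrow> 'k) \<Rightarrow> nat \<Rightarrow> 'w" where
  "Phi hs = (\<lambda>q. if q < D then mact N (v (q mod d)) (hs (q div d div r) (q div d mod r)) else mzero N)"

definition kap :: "(nat \<Rightarrow> nat \<Rightarrow> 'i \<Rightarrow> 'k) \<Rightarrow> nat \<Rightarrow> 'v" where
  "kap hs = (\<lambda>l. if l < m then msum M (\<lambda>j. mact M (x j) (hs l j)) r else mzero M)"

sublocale rM: rmodl A M using H RMM by unfold_locales
sublocale rN: rmodl A N using H RMN by unfold_locales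
sublocale rP: rmodl A P using H dsum_rmodule rM.rmodl_axioms by unfold_locales
sublocale rN': rmodl A N' using H dsum_rmodule rN.rmodl_axioms by unfold_locales
sublocale qP: qmod A P W using SW by unfold_locales

lemma Phi_car: "Phi hs \<in> mcar N'"
  unfolding Phi_def dsum_def using idx_dec spanv1 rN.act_closed by (auto simp: D_def)

lemma kap_car: "kap hs \<in> mcar P"
  unfolding kap_def dsum_def using genx rM.act_closed by (auto intro!: rM.msum_closed)

lemma Phi_add: "madd N' (Phi hs) (Phi hs') = Phi (\<lambda>l j a. hs l j a + hs' l j a)"
  unfolding Phi_def using idx_dec spanv1 by (auto simp: dsum_def fun_eq_iff D_def rN.act_hadd rN.zero_add rN.zero_closed)

lemma kap_add: "madd P (kap hs) (kap hs') = kap (\<lambda>l j a. hs l j a + hs' l j a)"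
  unfolding kap_def using genx
  by (auto simp: dsum_def fun_eq_iff rM.act_hadd rM.zero_add rM.zero_closed rM.act_closed rM.msum_add[symmetric] intro!: msum_cong)

lemma Phi_act: "mact N' (Phi hs) h = Phi (\<lambda>l j. hmult A (hs l j) h)"
  unfolding Phi_def using idx_dec spanv1 by (auto simp: dsum_def fun_eq_iff D_def rN.act_mult rN.zero_act)

lemma kap_act: "mact P (kap hs) h = kap (\<lambda>l j. hmult A (hs l j) h)"
  unfolding kap_def using genx
  by (auto simp: dsum_def fun_eq_iff rM.act_mult rM.zero_act rM.act_closed rM.msum_act intro!: msum_cong)

lemma Phi_zero: "Phi (\<lambda>l j a. 0) = mzero N'"
  unfolding Phi_def using idx_dec spanv1 by (auto simp: dsum_def fun_eq_iff D_def rN.act_zero_h)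

lemma kap_zero: "kap (\<lambda>l j a. 0) = mzero P"
  unfolding kap_def using genx by (auto simp: dsum_def fun_eq_iff rM.act_zero_h rM.msum_zero cong: msum_cong)


lemma Phi_kap:
  assumes eq: "Phi hs = Phi hs'"
  shows "kap hs = kap hs'"
proof -
  have "mact M (x j) (hs l j) = mact M (x j) (hs' l j)" if l: "l < m" and j: "j < r" for l j
  proof (rule sep_from_span[OF H RMM RMN spanv1 spanv2 ann _ ])
    show "\<forall>i<d. mact N (v i) (hs l j) = mact N (v i) (hs' l j)"
    proof (intro allI impI)
      fix i assume i: "i < d"
      have "Phi hs ((l*r+j)*d+i) = Phi hs' ((l*r+j)*d+i)" using eq by simp
      thus "mact N (v i) (hs l j) = mact N (v i) (hs' l j)"
        using idx_enc[OF l j i] unfolding Phi_def D_def by simp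
    qed
    show "x j \<in> mcar M" using genx j by blast
  qed
  thus ?thesis unfolding kap_def by (auto simp: fun_eq_iff intro!: msum_cong)
qed

lemma kap_surj:
  assumes p: "p \<in> mcar P"
  shows "\<exists>hs. kap hs = p"
proof -
  have "\<forall>l. \<exists>hs. l < m \<longrightarrow> p l = msum M (\<lambda>j. mact M (x j) (hs j)) r"
    using p gen unfolding dsum_def by auto
  then obtain HS where HS: "\<And>l. l < m \<Longrightarrow> p l = msum M (\<lambda>j. mact M (x j) (HS l j)) r" by metis
  have "kap HS = p" unfolding kap_def using HS p by (auto simp: fun_eq_iff dsum_def)
  thus ?thesis by blast
qed

definition "W' = {Phi hs | hs. kap hs \<in> W}"

lemma W'I: "kap hs \<in> W \<Longrightarrow> Phi hs \<in> W'"
  unfolding W'_def by blast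

lemma W'E: "u \<in> W' \<Longrightarrow> (\<And>hs. u = Phi hs \<Longrightarrow> kap hs \<in> W \<Longrightarrow> Q) \<Longrightarrow> Q"
  unfolding W'_def by blast

lemma W'_submod: "submod W' N'"
  unfolding submod_def
proof (intro conjI ballI allI)
  show "W' \<subseteq> mcar N'" unfolding W'_def using Phi_car by blast
  show "mzero N' \<in> W'"
  proof -
    have "kap (\<lambda>l j a. 0) \<in> W" unfolding kap_zero by (rule qP.W_zero)
    hence "Phi (\<lambda>l j a. 0) \<in> W'" by (rule W'I)
    thus ?thesis unfolding Phi_zero .
  qed
  show "madd N' u w \<in> W'" if uW: "u \<in> W'" and wW: "w \<in> W'" for u w
  proof -
    obtain hs where hs: "u = Phi hs" "kap hs \<in> W" by (rule W'E[OF uW])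
    obtain hs' where hs': "w = Phi hs'" "kap hs' \<in> W" by (rule W'E[OF wW])
    have "kap (\<lambda>l j a. hs l j a + hs' l j a) \<in> W" unfolding kap_add[symmetric] using qP.W_add hs hs' by blast
    hence "Phi (\<lambda>l j a. hs l j a + hs' l j a) \<in> W'" by (rule W'I)
    thus ?thesis unfolding hs hs' Phi_add .
  qed
  show "\<exists>w\<in>W'. madd N' u w = mzero N'" if uW: "u \<in> W'" for u
  proof -
    obtain hs where hs: "u = Phi hs" "kap hs \<in> W" by (rule W'E[OF uW])
    let ?n = "\<lambda>l j a. - hs l j a"
    have z: "(\<lambda>l j a. hs l j a + ?n l j a) = (\<lambda>l j a. 0)" by simp
    have "madd P (kap hs) (kap ?n) = mzero P" unfolding kap_add z kap_zero ..
    hence "kap ?n = mneg P (kap hs)" using rP.neg_unique kap_car by blast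
    hence "kap ?n \<in> W" using qP.W_neg hs by simp
    moreover have "madd N' u (Phi ?n) = mzero N'" unfolding hs Phi_add z Phi_zero ..
    ultimately show ?thesis using W'I hs by blast
  qed
  show "mact N' u h \<in> W'" if uW: "u \<in> W'" for u h
  proof -
    obtain hs where hs: "u = Phi hs" "kap hs \<in> W" by (rule W'E[OF uW])
    have "kap (\<lambda>l j. hmult A (hs l j) h) \<in> W" unfolding kap_act[symmetric] using qP.W_act hs by blast
    hence "Phi (\<lambda>l j. hmult A (hs l j) h) \<in> W'" by (rule W'I)
    thus ?thesis unfolding hs Phi_act .
  qed
qed

sublocale qN': qmod A N' W' using W'_submod by unfold_locales

lemma key:
  "mcoset N' W' (Phi hs) = mcoset N' W' (Phi hs') \<longleftrightarrow> mcoset P W (kap hs) = mcoset P W (kap hs')"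
proof
  assume "mcoset N' W' (Phi hs) = mcoset N' W' (Phi hs')"
  then obtain w where w: "w \<in> W'" "Phi hs' = madd N' (Phi hs) w" using qN'.coset_eq_iff Phi_car by blast
  then obtain hs'' where hs'': "w = Phi hs''" "kap hs'' \<in> W" using W'E[of w] by blast
  have "Phi hs' = Phi (\<lambda>l j a. hs l j a + hs'' l j a)" unfolding w(2) hs''(1) Phi_add ..
  hence "kap hs' = kap (\<lambda>l j a. hs l j a + hs'' l j a)" by (rule Phi_kap)
  hence "kap hs' = madd P (kap hs) (kap hs'')" unfolding kap_add .
  thus "mcoset P W (kap hs) = mcoset P W (kap hs')" using qP.coset_eq_iff kap_car hs'' by blast
next
  assume "mcoset P W (kap hs) = mcoset P W (kap hs')"
  then obtain w where w: "w \<in> W" "kap hs' = madd P (kap hs) w" using qP.coset_eq_iff kap_car by blast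
  let ?d = "\<lambda>l j a. hs' l j a - hs l j a"
  have e: "(\<lambda>l j a. hs l j a + ?d l j a) = hs'" by simp
  have "madd P (kap hs) (kap ?d) = madd P (kap hs) w" unfolding kap_add e w(2)[symmetric] ..
  hence "kap ?d = w" using rP.add_left_cancel kap_car qP.W_sub w by blast
  hence "Phi ?d \<in> W'" using W'I w by simp
  moreover have "Phi hs' = madd N' (Phi hs) (Phi ?d)" unfolding Phi_add e ..
  ultimately show "mcoset N' W' (Phi hs) = mcoset N' W' (Phi hs')" using qN'.coset_eq_iff Phi_car by blast
qed


abbreviation "Q \<equiv> quot P W"
abbreviation "Q' \<equiv> quot N' W'"

sublocale rQ: rmodl A Q using H qP.quot_rmodule by unfold_locales

definition "S' = {mcoset N' W' (Phi hs) | hs. mcoset P W (kap hs) \<in> S}"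

lemma S'I: "mcoset P W (kap hs) \<in> S \<Longrightarrow> mcoset N' W' (Phi hs) \<in> S'"
  unfolding S'_def by blast

lemma S'E: "T \<in> S' \<Longrightarrow> (\<And>hs. T = mcoset N' W' (Phi hs) \<Longrightarrow> mcoset P W (kap hs) \<in> S \<Longrightarrow> R) \<Longrightarrow> R"
  unfolding S'_def by blast

lemma SS_sub: "C \<in> S \<Longrightarrow> C \<in> mcar Q" using SS unfolding submod_def by blast
lemma SS_zero: "mzero Q \<in> S" using SS unfolding submod_def by blast
lemma SS_add: "C \<in> S \<Longrightarrow> C' \<in> S \<Longrightarrow> madd Q C C' \<in> S" using SS unfolding submod_def by blast
lemma SS_neg: "C \<in> S \<Longrightarrow> \<exists>w\<in>S. madd Q C w = mzero Q" using SS unfolding submod_def by blast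
lemma SS_act: "C \<in> S \<Longrightarrow> mact Q C h \<in> S" using SS unfolding submod_def by blast

lemma cQ_add: "madd Q (mcoset P W (kap hs)) (mcoset P W (kap hs')) = mcoset P W (kap (\<lambda>l j a. hs l j a + hs' l j a))"
  unfolding qP.coset_add[OF kap_car kap_car] kap_add ..
lemma cQ'_add: "madd Q' (mcoset N' W' (Phi hs)) (mcoset N' W' (Phi hs')) = mcoset N' W' (Phi (\<lambda>l j a. hs l j a + hs' l j a))"
  unfolding qN'.coset_add[OF Phi_car Phi_car] Phi_add ..
lemma cQ_act: "mact Q (mcoset P W (kap hs)) h = mcoset P W (kap (\<lambda>l j. hmult A (hs l j) h))"
  unfolding qP.coset_act[OF kap_car] kap_act ..
lemma cQ'_act: "mact Q' (mcoset N' W' (Phi hs)) h = mcoset N' W' (Phi (\<lambda>l j. hmult A (hs l j) h))"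
  unfolding qN'.coset_act[OF Phi_car] Phi_act ..
lemma cQ_zero: "mcoset P W (kap (\<lambda>l j a. 0)) = mzero Q"
  unfolding kap_zero qP.coset_zero quot_sel ..
lemma cQ'_zero: "mcoset N' W' (Phi (\<lambda>l j a. 0)) = mzero Q'"
  unfolding Phi_zero qN'.coset_zero quot_sel ..

lemma S'_submod: "submod S' Q'"
  unfolding submod_def
proof (intro conjI ballI allI)
  show "S' \<subseteq> mcar Q'"
  proof
    fix T assume "T \<in> S'"
    then obtain hs where "T = mcoset N' W' (Phi hs)" by (rule S'E)
    thus "T \<in> mcar Q'" using qN'.quot_carI[OF Phi_car] by simp
  qed
  show "mzero Q' \<in> S'"
    unfolding cQ'_zero[symmetric] by (rule S'I) (unfold cQ_zero, rule SS_zero)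
  show "madd Q' T T' \<in> S'" if T: "T \<in> S'" and T': "T' \<in> S'" for T T'
  proof -
    obtain hs where hs: "T = mcoset N' W' (Phi hs)" "mcoset P W (kap hs) \<in> S" by (rule S'E[OF T])
    obtain hs' where hs': "T' = mcoset N' W' (Phi hs')" "mcoset P W (kap hs') \<in> S" by (rule S'E[OF T'])
    have "mcoset P W (kap (\<lambda>l j a. hs l j a + hs' l j a)) \<in> S"
      unfolding cQ_add[symmetric] by (rule SS_add[OF hs(2) hs'(2)])
    hence "mcoset N' W' (Phi (\<lambda>l j a. hs l j a + hs' l j a)) \<in> S'" by (rule S'I)
    thus ?thesis unfolding hs hs' cQ'_add .
  qed
  show "\<exists>w\<in>S'. madd Q' T w = mzero Q'" if T: "T \<in> S'" for T
  proof -
    obtain hs where hs: "T = mcoset N' W' (Phi hs)" "mcoset P W (kap hs) \<in> S" by (rule S'E[OF T])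
    let ?n = "\<lambda>l j a. - hs l j a"
    have z: "(\<lambda>l j a. hs l j a + ?n l j a) = (\<lambda>l j a. 0)" by simp
    obtain w' where w': "w' \<in> S" "madd Q (mcoset P W (kap hs)) w' = mzero Q" using SS_neg[OF hs(2)] by blast
    have "madd Q (mcoset P W (kap hs)) (mcoset P W (kap ?n)) = mzero Q" unfolding cQ_add z cQ_zero ..
    hence "mcoset P W (kap ?n) = mneg Q (mcoset P W (kap hs))"
      using rQ.neg_unique qP.quot_carI[OF kap_car] by blast
    moreover have "w' = mneg Q (mcoset P W (kap hs))"
      using rQ.neg_unique qP.quot_carI[OF kap_car] w' SS_sub by blast
    ultimately have "mcoset P W (kap ?n) \<in> S" using w' by simp
    hence "mcoset N' W' (Phi ?n) \<in> S'" by (rule S'I)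
    moreover have "madd Q' T (mcoset N' W' (Phi ?n)) = mzero Q'" unfolding hs cQ'_add z cQ'_zero ..
    ultimately show ?thesis by blast
  qed
  show "mact Q' T h \<in> S'" if T: "T \<in> S'" for T h
  proof -
    obtain hs where hs: "T = mcoset N' W' (Phi hs)" "mcoset P W (kap hs) \<in> S" by (rule S'E[OF T])
    have "mcoset P W (kap (\<lambda>l j. hmult A (hs l j) h)) \<in> S"
      unfolding cQ_act[symmetric] by (rule SS_act[OF hs(2)])
    hence "mcoset N' W' (Phi (\<lambda>l j. hmult A (hs l j) h)) \<in> S'" by (rule S'I)
    thus ?thesis unfolding hs cQ'_act .
  qed
qed

definition "chs C = (SOME hs. mcoset P W (kap hs) = C)"

lemma chs_prop: "C \<in> S \<Longrightarrow> mcoset P W (kap (chs C)) = C"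
proof -
  assume C: "C \<in> S"
  then obtain p where p: "p \<in> mcar P" "C = mcoset P W p" using SS_sub unfolding quot_sel by blast
  then obtain hs where "kap hs = p" using kap_surj by blast
  hence "\<exists>hs. mcoset P W (kap hs) = C" using p by blast
  thus ?thesis unfolding chs_def by (rule someI_ex)
qed

definition "giso C = mcoset N' W' (Phi (chs C))"

lemma giso_riso: "riso (Q\<lparr>mcar := S\<rparr>) (Q'\<lparr>mcar := S'\<rparr>)"
  unfolding riso_def
proof (intro exI[of _ giso] conjI)
  show "rhom (Q\<lparr>mcar := S\<rparr>) (Q'\<lparr>mcar := S'\<rparr>) giso"
    unfolding rhom_def
  proof (intro conjI ballI allI)
    show "giso C \<in> mcar (Q'\<lparr>mcar := S'\<rparr>)" if C: "C \<in> mcar (Q\<lparr>mcar := S\<rparr>)" for C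
      using C chs_prop S'I unfolding giso_def by simp
    show "giso (madd (Q\<lparr>mcar := S\<rparr>) C C') = madd (Q'\<lparr>mcar := S'\<rparr>) (giso C) (giso C')"
      if C: "C \<in> mcar (Q\<lparr>mcar := S\<rparr>)" and C': "C' \<in> mcar (Q\<lparr>mcar := S\<rparr>)" for C C'
    proof -
      have CS: "C \<in> S" "C' \<in> S" using C C' by simp_all
      have "mcoset P W (kap (chs (madd Q C C'))) = mcoset P W (kap (\<lambda>l j a. chs C l j a + chs C' l j a))"
        unfolding cQ_add[symmetric] chs_prop[OF CS(1)] chs_prop[OF CS(2)] chs_prop[OF SS_add[OF CS]] ..
      hence "mcoset N' W' (Phi (chs (madd Q C C'))) = mcoset N' W' (Phi (\<lambda>l j a. chs C l j a + chs C' l j a))"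
        using key by blast
      thus ?thesis by (simp add: giso_def cQ'_add)
    qed
    show "giso (mact (Q\<lparr>mcar := S\<rparr>) C h) = mact (Q'\<lparr>mcar := S'\<rparr>) (giso C) h"
      if C: "C \<in> mcar (Q\<lparr>mcar := S\<rparr>)" for C h
    proof -
      have CS: "C \<in> S" using C by simp
      have "mcoset P W (kap (chs (mact Q C h))) = mcoset P W (kap (\<lambda>l j. hmult A (chs C l j) h))"
        unfolding cQ_act[symmetric] chs_prop[OF CS] chs_prop[OF SS_act[OF CS]] ..
      hence "mcoset N' W' (Phi (chs (mact Q C h))) = mcoset N' W' (Phi (\<lambda>l j. hmult A (chs C l j) h))"
        using key by blast
      thus ?thesis by (simp add: giso_def cQ'_act)
    qed
  qed
  show "bij_betw giso (mcar (Q\<lparr>mcar := S\<rparr>)) (mcar (Q'\<lparr>mcar := S'\<rparr>))"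
    unfolding bij_betw_def
  proof (intro conjI)
    show "inj_on giso (mcar (Q\<lparr>mcar := S\<rparr>))"
    proof (rule inj_onI)
      fix C C' assume C: "C \<in> mcar (Q\<lparr>mcar := S\<rparr>)" and C': "C' \<in> mcar (Q\<lparr>mcar := S\<rparr>)" and e: "giso C = giso C'"
      have "mcoset P W (kap (chs C)) = mcoset P W (kap (chs C'))" using e key unfolding giso_def by blast
      thus "C = C'" using chs_prop C C' by simp
    qed
    show "giso ` mcar (Q\<lparr>mcar := S\<rparr>) = mcar (Q'\<lparr>mcar := S'\<rparr>)"
    proof (rule set_eqI, rule iffI)
      fix T assume "T \<in> giso ` mcar (Q\<lparr>mcar := S\<rparr>)"
      thus "T \<in> mcar (Q'\<lparr>mcar := S'\<rparr>)" using chs_prop S'I unfolding giso_def by auto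
    next
      fix T assume "T \<in> mcar (Q'\<lparr>mcar := S'\<rparr>)"
      hence "T \<in> S'" by simp
      then obtain hs where hs: "T = mcoset N' W' (Phi hs)" "mcoset P W (kap hs) \<in> S" by (rule S'E)
      let ?C = "mcoset P W (kap hs)"
      have "mcoset P W (kap (chs ?C)) = mcoset P W (kap hs)" using chs_prop[OF hs(2)] .
      hence "giso ?C = T" unfolding giso_def hs(1) using key by blast
      thus "T \<in> giso ` mcar (Q\<lparr>mcar := S\<rparr>)" using hs(2) by force
    qed
  qed
qed

end

theorem sigma_transfer:
  fixes A :: "('k::field,'i::finite) hopf_data" and M :: "('i \<Rightarrow> 'k,'v) rmod" and N :: "('i \<Rightarrow> 'k,'w) rmod"
    and X :: "('i \<Rightarrow> 'k, 'x) rmod"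
  assumes H: "hopf_algebra A" and RMM: "rmodule A M" and RMN: "rmodule A N"
    and genx: "\<forall>j<r. x j \<in> mcar M" and gen: "\<forall>u\<in>mcar M. \<exists>hs. u = msum M (\<lambda>j. mact M (x j) (hs j)) r"
    and spanv1: "\<forall>i<d. v i \<in> mcar N" and spanv2: "\<forall>u\<in>mcar N. \<exists>c. u = msum N (\<lambda>i. mact N (v i) (hsc A (c i))) d"
    and ann: "\<forall>h. (\<forall>u\<in>mcar N. mact N u h = mzero N) \<longrightarrow> (\<forall>u\<in>mcar M. mact M u h = mzero M)"
    and sig: "in_sigma M X"
  shows "in_sigma N X"
proof -
  obtain m W S where SW: "submod W (dsum m M)" and SS: "submod S (quot (dsum m M) W)"
    and iso: "riso X ((quot (dsum m M) W)\<lparr>mcar := S\<rparr>)"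
    using sig unfolding in_sigma_def by blast
  interpret st: sig_transfer A M N r d x v m W S
    using H RMM RMN genx gen spanv1 spanv2 ann SW SS by unfold_locales
  show ?thesis unfolding in_sigma_def
    using st.W'_submod st.S'_submod riso_trans[OF iso st.giso_riso] by blast
qed

section \<open>Q tensor powers as modules\<close>

lemma itc_hsc: "itcomul A n (hsc A c) zs = c * itcomul A n (hone A) zs"
  unfolding hsc_def by (rule itc_smult)

lemma tact_hsc:
  assumes H: "hopf_algebra A" and t: "\<forall>xs. length xs \<noteq> n \<longrightarrow> t xs = 0"
  shows "tact A n t (hsc A c) = (\<lambda>ys. c * t ys)"
proof (rule ext)
  fix ys
  show "tact A n t (hsc A c) ys = c * t ys"
  proof (cases "length ys = n")
    case True
    have "tprod A n t (itcomul A n (hsc A c)) ys = tprod A n t (\<lambda>zs. c * itcomul A n (hone A) zs) ys"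
      by (rule tprod_cong) (simp_all add: itc_hsc)
    also have "\<dots> = c * t ys" by (simp add: tprod_smult_right tprod_unit[OF H True])
    finally show ?thesis using True by (simp add: tact_tprod)
  qed (use t in \<open>simp add: tact_def\<close>)
qed

lemma msum_Htens: "msum (Htens A n) f d = (\<lambda>ys. \<Sum>i<d. f i ys)"
  by (induction d) (auto simp: Htens_def)

lemma Qtens_qmod: "hopf_algebra A \<Longrightarrow> qmod A (Htens A n) (Kn A R n)"
  unfolding qmod_def qmod_axioms_def rmodl_def using Htens_rmodule Kn_submod by blast

lemma Qtens_rmodule: "hopf_algebra A \<Longrightarrow> rmodule A (Qtens A R n)"
  unfolding Qtens_def using Qtens_qmod qmod.quot_rmodule by blast

definition delta :: "'i list \<Rightarrow> 'i list \<Rightarrow> 'k::field" where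
  "delta xs = (\<lambda>ys. if ys = xs then 1 else 0)"

lemma Qtens_span:
  fixes A :: "('k::field,'i::finite) hopf_data"
  assumes H: "hopf_algebra A"
  shows "\<exists>d v. (\<forall>i<d. v i \<in> mcar (Qtens A R n)) \<and>
     (\<forall>u\<in>mcar (Qtens A R n). \<exists>c. u = msum (Qtens A R n) (\<lambda>i. mact (Qtens A R n) (v i) (hsc A (c i))) d)"
proof -
  interpret q: qmod A "Htens A n" "Kn A R n" using Qtens_qmod[OF H] .
  obtain es :: "'i list list" where es: "set es = {xs. length xs = n}" "distinct es"
    using finite_distinct_list[OF finite_L] by blast
  define v where "v i = mcoset (Htens A n) (Kn A R n) (delta (es!i))" for i
  have dcar: "delta (es!i) \<in> mcar (Htens A n)" if "i < length es" for i
    using that es nth_mem[OF that] by (auto simp: Htens_def delta_def)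
  show ?thesis
  proof (rule exI[of _ "length es"], rule exI[of _ v], intro conjI allI impI ballI)
    fix i assume "i < length es"
    thus "v i \<in> mcar (Qtens A R n)" unfolding v_def Qtens_def using q.quot_carI dcar by blast
  next
    fix u assume "u \<in> mcar (Qtens A R n)"
    then obtain t where t: "t \<in> mcar (Htens A n)" "u = mcoset (Htens A n) (Kn A R n) t"
      unfolding Qtens_def quot_sel by blast
    have t0: "\<forall>xs. length xs \<noteq> n \<longrightarrow> t xs = 0" using t by (simp add: Htens_def)
    define c where "c i = t (es!i)" for i
    have "msum (Qtens A R n) (\<lambda>i. mact (Qtens A R n) (v i) (hsc A (c i))) (length es)
        = msum (Qtens A R n) (\<lambda>i. mcoset (Htens A n) (Kn A R n) (mact (Htens A n) (delta (es!i)) (hsc A (c i)))) (length es)"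
      unfolding Qtens_def v_def using q.coset_act dcar by (intro msum_cong) simp
    also have "\<dots> = mcoset (Htens A n) (Kn A R n) (msum (Htens A n) (\<lambda>i. mact (Htens A n) (delta (es!i)) (hsc A (c i))) (length es))"
      unfolding Qtens_def by (rule q.msum_quot) (use dcar q.act_closed in auto)
    also have "msum (Htens A n) (\<lambda>i. mact (Htens A n) (delta (es!i)) (hsc A (c i))) (length es) = t"
    proof -
      have "msum (Htens A n) (\<lambda>i. mact (Htens A n) (delta (es!i)) (hsc A (c i))) (length es)
          = (\<lambda>ys. \<Sum>i<length es. c i * delta (es!i) ys)"
        unfolding msum_Htens
      proof (intro ext sum.cong refl)
        fix ys i assume "i \<in> {..<length es}"
        hence "delta (es!i) \<in> mcar (Htens A n)" using dcar by simp
        thus "mact (Htens A n) (delta (es!i)) (hsc A (c i)) ys = c i * delta (es!i) ys"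
          using tact_hsc[OF H] by (simp add: Htens_def)
      qed
      also have "\<dots> = (\<lambda>ys. \<Sum>xs\<in>set es. t xs * delta xs ys)"
      proof (rule ext)
        fix ys
        have b: "bij_betw ((!) es) {..<length es} (set es)" using es(2) by (simp add: bij_betw_nth)
        show "(\<Sum>i<length es. c i * delta (es!i) ys) = (\<Sum>xs\<in>set es. t xs * delta xs ys)"
          unfolding c_def using sum.reindex_bij_betw[OF b, of "\<lambda>xs. t xs * delta xs ys"] by simp
      qed
      also have "\<dots> = t"
      proof (rule ext)
        fix ys
        have "(\<Sum>xs\<in>set es. t xs * delta xs ys) = (\<Sum>xs\<in>set es. if ys = xs then t ys else 0)"
          by (rule sum.cong) (auto simp: delta_def)
        also have "\<dots> = (if ys \<in> set es then t ys else 0)" by simp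
        also have "\<dots> = t ys" using t0 es(1) by auto
        finally show "(\<Sum>xs\<in>set es. t xs * delta xs ys) = t ys" .
      qed
      finally show ?thesis .
    qed
    finally have "u = msum (Qtens A R n) (\<lambda>i. mact (Qtens A R n) (v i) (hsc A (c i))) (length es)"
      using t(2) by simp
    thus "\<exists>c. u = msum (Qtens A R n) (\<lambda>i. mact (Qtens A R n) (v i) (hsc A (c i))) (length es)" by blast
  qed
qed

lemma Qtens_gen:
  assumes H: "hopf_algebra A"
  shows "\<exists>r x. (\<forall>j<r. x j \<in> mcar (Qtens A R n)) \<and>
     (\<forall>u\<in>mcar (Qtens A R n). \<exists>hs. u = msum (Qtens A R n) (\<lambda>j. mact (Qtens A R n) (x j) (hs j)) r)"
proof -
  obtain d v where dv: "\<forall>i<d. v i \<in> mcar (Qtens A R n)"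
    "\<forall>u\<in>mcar (Qtens A R n). \<exists>c. u = msum (Qtens A R n) (\<lambda>i. mact (Qtens A R n) (v i) (hsc A (c i))) d"
    using Qtens_span[OF H] by blast
  have "\<forall>u\<in>mcar (Qtens A R n). \<exists>hs. u = msum (Qtens A R n) (\<lambda>j. mact (Qtens A R n) (v j) (hs j)) d"
  proof
    fix u assume "u \<in> mcar (Qtens A R n)"
    then obtain c where "u = msum (Qtens A R n) (\<lambda>i. mact (Qtens A R n) (v i) (hsc A (c i))) d" using dv(2) by blast
    thus "\<exists>hs. u = msum (Qtens A R n) (\<lambda>j. mact (Qtens A R n) (v j) (hs j)) d" by (intro exI[of _ "\<lambda>i. hsc A (c i)"])
  qed
  thus ?thesis using dv(1) by blast
qed

section \<open>Monotonicity of annihilators\<close>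

definition Emap :: "('k::field,'i::finite) hopf_data \<Rightarrow> nat \<Rightarrow> ('i list \<Rightarrow> 'k) \<Rightarrow> ('i list \<Rightarrow> 'k)" where
  "Emap A n t = (\<lambda>ys. if length ys = n then \<Sum>x\<in>UNIV. t (x#ys) * scounit A x else 0)"

definition Omap :: "('k::field,'i::finite) hopf_data \<Rightarrow> ('i list \<Rightarrow> 'k) \<Rightarrow> ('i list \<Rightarrow> 'k)" where
  "Omap A s = (\<lambda>xs. case xs of [] \<Rightarrow> 0 | x#ys \<Rightarrow> sunit A x * s ys)"

lemma hcounit_sum: "hcounit A (\<lambda>c. \<Sum>j\<in>S. y j c) = (\<Sum>j\<in>S. hcounit A (y j))"
  unfolding hcounit_def by (simp add: sum_distrib_right sum.swap[of _ S])

lemma RplusH_eps: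
  assumes H: "hopf_algebra A" and x: "x \<in> RplusH A R"
  shows "hcounit A x = 0"
proof -
  obtain n :: nat and f g where fg: "\<forall>j<n. f j \<in> R \<and> hcounit A (f j) = 0" and x: "x = (\<lambda>c. \<Sum>j<n. hmult A (f j) (g j) c)"
    using x unfolding RplusH_def mem_Collect_eq by blast
  have "hcounit A x = (\<Sum>j<n. hcounit A (f j) * hcounit A (g j))"
    unfolding x hcounit_sum using H8[OF H] by simp
  also have "\<dots> = 0" using fg by simp
  finally show ?thesis .
qed

lemma Emap_sum: "Emap A n (\<lambda>xs. \<Sum>j\<in>S. f j xs) = (\<lambda>ys. \<Sum>j\<in>S. Emap A n (f j) ys)"
  unfolding Emap_def by (simp add: fun_eq_iff sum_distrib_right sum.swap[of _ S])

lemma Emap_ptens: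
  fixes A :: "('k::field,'i::finite) hopf_data"
  assumes "length F' = n"
  shows "Emap A n (ptens (f0 # F')) = (\<lambda>ys. hcounit A f0 * ptens F' ys)"
proof (rule ext)
  fix ys :: "'i list"
  show "Emap A n (ptens (f0 # F')) ys = hcounit A f0 * ptens F' ys"
  proof (cases "length ys = n")
    case True
    have "Emap A n (ptens (f0 # F')) ys = (\<Sum>x\<in>UNIV. (f0 x * scounit A x) * (\<Prod>j<n. (F'!j) (ys!j)))"
      unfolding Emap_def ptens_def using True assms
      by (simp add: prod.lessThan_Suc_shift del: prod.lessThan_Suc) (simp add: mult_ac)
    also have "\<dots> = hcounit A f0 * ptens F' ys"
      unfolding hcounit_def ptens_def using True assms by (simp add: sum_distrib_right)
    finally show ?thesis .
  qed (use assms in \<open>simp add: Emap_def ptens_def\<close>)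
qed

lemma E_Kn:
  assumes H: "hopf_algebra A" and t: "t \<in> Kn A R (Suc n)"
  shows "Emap A n t \<in> Kn A R n"
proof -
  obtain m :: nat and F where F: "\<forall>j<m. length (F j) = Suc n \<and> (\<exists>i<Suc n. F j ! i \<in> RplusH A R)"
     and t: "t = (\<lambda>xs. \<Sum>j<m. ptens (F j) xs)"
    using t unfolding Kn_def mem_Collect_eq by blast
  have "\<forall>j\<in>{..<m}. Emap A n (ptens (F j)) \<in> Kn A R n"
  proof
    fix j assume "j \<in> {..<m}"
    then obtain i where i: "i < Suc n" "F j ! i \<in> RplusH A R" and len: "length (F j) = Suc n" using F by auto
    then obtain f0 F' where FF: "F j = f0 # F'" and len': "length F' = n" by (auto simp: length_Suc_conv)
    show "Emap A n (ptens (F j)) \<in> Kn A R n"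
    proof (cases i)
      case 0
      hence "hcounit A f0 = 0" using i FF RplusH_eps[OF H] by simp
      thus ?thesis unfolding FF Emap_ptens[OF len'] using Kn_zero by simp
    next
      case (Suc i')
      hence "ptens F' \<in> Kn A R n" using i FF len' by (intro Kn_single[of _ _ i']) auto
      thus ?thesis unfolding FF Emap_ptens[OF len'] by (rule Kn_smult)
    qed
  qed
  from Kn_sum[OF _ this] show ?thesis unfolding t Emap_sum by simp
qed

lemma Omap_car: "s \<in> mcar (Htens A n) \<Longrightarrow> Omap A s \<in> mcar (Htens A (Suc n))"
  unfolding Htens_def Omap_def by (auto split: list.split)

lemma E_O:
  fixes A :: "('k::field,'i::finite) hopf_data"
  assumes H: "hopf_algebra A" and s: "s \<in> mcar (Htens A n)"
  shows "Emap A n (tact A (Suc n) (Omap A s) h) = tact A n s h"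
proof (rule ext)
  fix ys :: "'i list"
  show "Emap A n (tact A (Suc n) (Omap A s) h) ys = tact A n s h ys"
  proof (cases "length ys = n")
    case True
    define T where "T c = tprod A n s (itcomul A n (basis_vec c)) ys" for c
    have inner: "tact A (Suc n) (Omap A s) h (y#ys) =
        (\<Sum>a\<in>UNIV. \<Sum>b\<in>UNIV. smul A a b y * (sunit A a * (\<Sum>c\<in>UNIV. hcomul A h (b,c) * T c)))" for y
    proof -
      have "tact A (Suc n) (Omap A s) h (y#ys) = tprod A (Suc n) (Omap A s) (itcomul A (Suc n) h) (y#ys)"
        using True by (simp add: tact_tprod)
      also have "\<dots> = (\<Sum>a\<in>UNIV. \<Sum>b\<in>UNIV. smul A a b y * tprod A n (\<lambda>xs. sunit A a * s xs)
            (\<lambda>zs. \<Sum>c\<in>UNIV. hcomul A h (b,c) * itcomul A n (basis_vec c) zs) ys)"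
        unfolding tprod_Suc by (simp add: Omap_def)
      also have "\<dots> = (\<Sum>a\<in>UNIV. \<Sum>b\<in>UNIV. smul A a b y * (sunit A a * (\<Sum>c\<in>UNIV. hcomul A h (b,c) * T c)))"
        unfolding T_def tprod_smult_left tprod_lin_right ..
      finally show ?thesis .
    qed
    have "Emap A n (tact A (Suc n) (Omap A s) h) ys =
        (\<Sum>y\<in>UNIV. \<Sum>a\<in>UNIV. \<Sum>b\<in>UNIV. (smul A a b y * scounit A y) * (sunit A a * (\<Sum>c\<in>UNIV. hcomul A h (b,c) * T c)))"
      unfolding Emap_def using True inner by (simp add: sum_distrib_left mult_ac)
    also have "\<dots> = (\<Sum>a\<in>UNIV. \<Sum>b\<in>UNIV. (\<Sum>y\<in>UNIV. smul A a b y * scounit A y) * (sunit A a * (\<Sum>c\<in>UNIV. hcomul A h (b,c) * T c)))"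
      by (subst sum_swap3[symmetric]) (simp add: sum_distrib_right)
    also have "\<dots> = (\<Sum>a\<in>UNIV. \<Sum>b\<in>UNIV. (sunit A a * scounit A a) * (scounit A b * (\<Sum>c\<in>UNIV. hcomul A h (b,c) * T c)))"
      by (simp only: F_eps_mult[OF H]) (simp add: mult_ac)
    also have "\<dots> = (\<Sum>a\<in>UNIV. sunit A a * scounit A a) * (\<Sum>b\<in>UNIV. scounit A b * (\<Sum>c\<in>UNIV. hcomul A h (b,c) * T c))"
      by (rule sum_product[symmetric])
    also have "\<dots> = (\<Sum>b\<in>UNIV. \<Sum>c\<in>UNIV. hcomul A h (b,c) * scounit A b * T c)"
      by (simp only: F_eps_one[OF H] mult_1_left) (simp add: sum_distrib_left mult_ac)
    also have "\<dots> = (\<Sum>c\<in>UNIV. \<Sum>b\<in>UNIV. hcomul A h (b,c) * scounit A b * T c)"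
      by (rule sum.swap)
    also have "\<dots> = (\<Sum>c\<in>UNIV. (\<Sum>b\<in>UNIV. hcomul A h (b,c) * scounit A b) * T c)"
      by (simp add: sum_distrib_right)
    also have "\<dots> = (\<Sum>c\<in>UNIV. h c * T c)"
      using fun_cong[OF spec[OF H4[OF H], of h]] by simp
    also have "\<dots> = tprod A n s (itcomul A n h) ys"
    proof -
      have "(\<lambda>zs. \<Sum>c\<in>UNIV. h c * itcomul A n (basis_vec c) zs) = itcomul A n h"
        by (rule ext) (rule itc_lin[symmetric])
      thus ?thesis unfolding T_def tprod_lin_right[symmetric] by simp
    qed
    finally show ?thesis using True by (simp add: tact_tprod)
  qed (simp add: Emap_def tact_def)
qed

lemma annih_Qtens:
  assumes H: "hopf_algebra A"
  shows "h \<in> annih UNIV (Qtens A R n) \<longleftrightarrow> (\<forall>t\<in>mcar (Htens A n). tact A n t h \<in> Kn A R n)"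
proof -
  interpret q: qmod A "Htens A n" "Kn A R n" using Qtens_qmod[OF H] .
  have "h \<in> annih UNIV (Qtens A R n) \<longleftrightarrow> (\<forall>t\<in>mcar (Htens A n). mact (quot (Htens A n) (Kn A R n)) (mcoset (Htens A n) (Kn A R n) t) h = Kn A R n)"
    unfolding annih_def Qtens_def quot_sel(1) quot_sel(3) by simp
  also have "\<dots> \<longleftrightarrow> (\<forall>t\<in>mcar (Htens A n). mcoset (Htens A n) (Kn A R n) (mact (Htens A n) t h) = Kn A R n)"
    using q.coset_act by (intro ball_cong) auto
  also have "\<dots> \<longleftrightarrow> (\<forall>t\<in>mcar (Htens A n). mact (Htens A n) t h \<in> Kn A R n)"
    using q.coset_W_iff q.act_closed by auto
  finally show ?thesis by (simp add: Htens_def)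
qed

lemma Ann_mono:
  assumes H: "hopf_algebra A"
  shows "annih UNIV (Qtens A R (Suc n)) \<subseteq> annih UNIV (Qtens A R n)"
proof
  fix h assume "h \<in> annih UNIV (Qtens A R (Suc n))"
  hence a: "\<forall>t\<in>mcar (Htens A (Suc n)). tact A (Suc n) t h \<in> Kn A R (Suc n)" using annih_Qtens[OF H] by blast
  have "\<forall>s\<in>mcar (Htens A n). tact A n s h \<in> Kn A R n"
  proof
    fix s assume s: "s \<in> mcar (Htens A n)"
    have "Emap A n (tact A (Suc n) (Omap A s) h) \<in> Kn A R n"
      using E_Kn[OF H] a Omap_car[OF s] by blast
    thus "tact A n s h \<in> Kn A R n" unfolding E_O[OF H s] .
  qed
  thus "h \<in> annih UNIV (Qtens A R n)" using annih_Qtens[OF H] by blast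
qed

lemma Ann_add:
  assumes H: "hopf_algebra A" and "h \<in> annih UNIV (Qtens A R n)" "h' \<in> annih UNIV (Qtens A R n)"
  shows "(\<lambda>a. h a + h' a) \<in> annih UNIV (Qtens A R n)"
proof -
  interpret q: qmod A "Htens A n" "Kn A R n" using Qtens_qmod[OF H] .
  show ?thesis unfolding annih_Qtens[OF H]
  proof (intro ballI)
    fix t assume t: "t \<in> mcar (Htens A n)"
    have e: "tact A n t (\<lambda>a. h a + h' a) = (\<lambda>xs. tact A n t h xs + tact A n t h' xs)"
      using q.act_hadd[OF t] by (simp add: Htens_def)
    have "tact A n t h \<in> Kn A R n" "tact A n t h' \<in> Kn A R n"
      using assms(2,3) t unfolding annih_Qtens[OF H] by blast+
    thus "tact A n t (\<lambda>a. h a + h' a) \<in> Kn A R n" unfolding e by (rule Kn_add)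
  qed
qed

lemma Ann_smult:
  assumes H: "hopf_algebra A" and "h \<in> annih UNIV (Qtens A R n)"
  shows "(\<lambda>a. c * h a) \<in> annih UNIV (Qtens A R n)"
proof -
  have "tact A n t (\<lambda>a. c * h a) = (\<lambda>ys. c * tact A n t h ys)" for t
  proof -
    have "tprod A n t (itcomul A n (\<lambda>a. c * h a)) ys = c * tprod A n t (itcomul A n h) ys" for ys
    proof -
      have "tprod A n t (itcomul A n (\<lambda>a. c * h a)) ys = tprod A n t (\<lambda>zs. c * itcomul A n h zs) ys"
        by (rule tprod_cong) (simp_all add: itc_smult)
      thus ?thesis by (simp add: tprod_smult_right)
    qed
    thus ?thesis by (simp add: tact_tprod fun_eq_iff)
  qed
  thus ?thesis using assms(2) unfolding annih_Qtens[OF H] by (auto intro!: Kn_smult)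
qed

lemma Ann_zero:
  assumes H: "hopf_algebra A"
  shows "(\<lambda>a. 0) \<in> annih UNIV (Qtens A R n)"
proof -
  interpret q: qmod A "Htens A n" "Kn A R n" using Qtens_qmod[OF H] .
  show ?thesis unfolding annih_Qtens[OF H]
  proof
    fix t assume t: "t \<in> mcar (Htens A n)"
    have "tact A n t (\<lambda>_. 0) = (\<lambda>xs. 0)" using q.act_zero_h[OF t] by (simp add: Htens_def)
    thus "tact A n t (\<lambda>a. 0) \<in> Kn A R n" using Kn_zero by simp
  qed
qed

section \<open>Stabilisation of the annihilator chain\<close>

lemma fsum_apply: "(\<Sum>x\<in>S. g x) a = (\<Sum>x\<in>S. g x a)"
  by (induction S rule: infinite_finite_induct) auto

interpretation fv: vector_space "\<lambda>(c::'k::field) (f::'i \<Rightarrow> 'k) a. c * f a"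
  by unfold_locales (auto simp: fun_eq_iff algebra_simps)

lemma basis_vec_inj: "inj (basis_vec :: 'i \<Rightarrow> 'i \<Rightarrow> 'k::field)"
proof (rule injI)
  fix a b :: 'i assume "(basis_vec a :: 'i \<Rightarrow> 'k) = basis_vec b"
  hence "(basis_vec a :: 'i \<Rightarrow> 'k) a = basis_vec b a" by simp
  thus "a = b" by (simp add: basis_vec_def split: if_splits)
qed

lemma basis_span: "(f :: 'i::finite \<Rightarrow> 'k::field) \<in> fv.span (range basis_vec)"
proof -
  have "f = (\<Sum>a\<in>UNIV. (\<lambda>b. f a * basis_vec a b))"
    by (rule ext) (simp add: fsum_apply bsimps cong: if_cong)
  also have "\<dots> \<in> fv.span (range basis_vec)"
    by (intro fv.span_sum fv.span_scale fv.span_base) auto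
  finally show ?thesis .
qed

lemma basis_indep: "fv.independent (range (basis_vec :: 'i::finite \<Rightarrow> 'i \<Rightarrow> 'k::field))"
proof (rule fv.independent_if_scalars_zero)
  show "finite (range (basis_vec :: 'i \<Rightarrow> 'i \<Rightarrow> 'k))" by simp
  fix f x assume s: "(\<Sum>x\<in>range (basis_vec :: 'i \<Rightarrow> 'i \<Rightarrow> 'k). (\<lambda>a. f x * x a)) = 0"
    and x: "x \<in> range (basis_vec :: 'i \<Rightarrow> 'i \<Rightarrow> 'k)"
  then obtain c where c: "x = basis_vec c" by blast
  have "0 = (\<Sum>x\<in>range (basis_vec :: 'i \<Rightarrow> 'i \<Rightarrow> 'k). (\<lambda>a. f x * x a)) c" using s by simp
  also have "\<dots> = (\<Sum>b\<in>UNIV. f (basis_vec b) * basis_vec b c)"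
    by (simp add: fsum_apply sum.reindex[OF basis_vec_inj])
  also have "\<dots> = f (basis_vec c)"
    by (simp add: bsimps cong: if_cong)
  finally show "f x = 0" using c by simp
qed

interpretation fvf: finite_dimensional_vector_space "\<lambda>(c::'k::field) (f::'i::finite \<Rightarrow> 'k) a. c * f a" "range basis_vec"
  by unfold_locales (auto simp: basis_indep basis_span)

lemma chain_stab:
  fixes V :: "nat \<Rightarrow> ('i::finite \<Rightarrow> 'k::field) set"
  assumes sub: "\<And>n. fv.subspace (V n)" and dec: "\<And>n. V (Suc n) \<subseteq> V n"
  shows "\<exists>N\<ge>1. \<forall>m\<ge>N. V N = V m"
proof -
  have anti: "V m' \<subseteq> V m" if "m \<le> m'" for m m'
    using that
  proof (induction m' rule: dec_induct)
    case base thus ?case by simp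
  next
    case (step k) thus ?case using dec[of k] by blast
  qed
  obtain N where N: "N \<ge> 1" "\<And>n. n \<ge> 1 \<Longrightarrow> fv.dim (V N) \<le> fv.dim (V n)"
    using ex_has_least_nat[of "\<lambda>n. n \<ge> (1::nat)" 1 "\<lambda>n. fv.dim (V n)"] by auto
  have "V N = V m" if m: "m \<ge> N" for m
  proof -
    have "V m \<subseteq> V N" using anti m by blast
    moreover have "fv.dim (V m) \<ge> fv.dim (V N)" using N m by simp
    ultimately have "V m = V N" using fvf.subspace_dim_equal sub by blast
    thus ?thesis by simp
  qed
  thus ?thesis using N by blast
qed

lemma Ann_subspace:
  assumes H: "hopf_algebra A"
  shows "fv.subspace (annih UNIV (Qtens A R n))"
  unfolding fv.subspace_def
  using Ann_zero[OF H] Ann_add[OF H] Ann_smult[OF H] by (simp add: zero_fun_def plus_fun_def)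

lemma ellQ_prop:
  fixes A :: "('k::field,'i::finite) hopf_data"
  assumes H: "hopf_algebra A"
  shows "1 \<le> ellQ A R \<and> (\<forall>m\<ge>ellQ A R. annih UNIV (Qtens A R (ellQ A R)) = annih UNIV (Qtens A R m))"
proof -
  have "\<exists>N\<ge>1. \<forall>m\<ge>N. annih UNIV (Qtens A R N) = annih UNIV (Qtens A R m)"
    by (rule chain_stab) (use Ann_subspace[OF H] Ann_mono[OF H] in auto)
  hence "\<exists>n. 1 \<le> n \<and> (\<forall>m\<ge>n. annih UNIV (Qtens A R n) = annih UNIV (Qtens A R m))" by blast
  thus ?thesis unfolding ellQ_def by (rule LeastI_ex)
qed

lemma sigma_dir:
  fixes A :: "('k::field,'i::finite) hopf_data" and X :: "('i \<Rightarrow> 'k, 'x) rmod"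
  assumes H: "hopf_algebra A"
    and ann: "annih UNIV (Qtens A R b) \<subseteq> annih UNIV (Qtens A R a)"
    and sig: "in_sigma (Qtens A R a) X"
  shows "in_sigma (Qtens A R b) X"
proof -
  obtain r x where gx: "\<forall>j<r. x j \<in> mcar (Qtens A R a)"
    "\<forall>u\<in>mcar (Qtens A R a). \<exists>hs. u = msum (Qtens A R a) (\<lambda>j. mact (Qtens A R a) (x j) (hs j)) r"
    using Qtens_gen[OF H] by blast
  obtain d v where sv: "\<forall>i<d. v i \<in> mcar (Qtens A R b)"
    "\<forall>u\<in>mcar (Qtens A R b). \<exists>c. u = msum (Qtens A R b) (\<lambda>i. mact (Qtens A R b) (v i) (hsc A (c i))) d"
    using Qtens_span[OF H] by blast
  have ann': "\<forall>h. (\<forall>u\<in>mcar (Qtens A R b). mact (Qtens A R b) u h = mzero (Qtens A R b)) \<longrightarrow>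
      (\<forall>u\<in>mcar (Qtens A R a). mact (Qtens A R a) u h = mzero (Qtens A R a))"
    using ann unfolding annih_def by blast
  show ?thesis
    by (rule sigma_transfer[OF H Qtens_rmodule[OF H] Qtens_rmodule[OF H] gx sv ann' sig])
qed

theorem mainTheorem12:
  fixes A :: "('k::field, 'i::finite) hopf_data"
    and R :: "('i \<Rightarrow> 'k) set"
    and n :: nat
    and X :: "('i \<Rightarrow> 'k, 'x) rmod"
  assumes "hopf_algebra A"
    and "hopf_subalgebra A R"
    and "rmodule A X"
  shows "in_sigma (Qtens A R (ellQ A R)) X \<longleftrightarrow> in_sigma (Qtens A R (ellQ A R + n)) X"
proof -
  have eq: "annih UNIV (Qtens A R (ellQ A R)) = annih UNIV (Qtens A R (ellQ A R + n))"
    using ellQ_prop[OF assms(1), of R] by simp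
  show ?thesis
    using sigma_dir[OF assms(1)] eq by blast
qed

end
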